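(* Let $A$ be a generator matrix of the repetition $[n_a,1,n_a]_q$ code and let $B$ be a parity-check matrix of a $q$-ary Hamming code with parameters $[n_b,k_b,3]_q$, where $n_b=(q^{m_b}-1)/(q-1)$ and $k_b=n_b-m_b$. Let $C$ be the linear code over $\mathbb{F}_q$ with parity-check matrix $H=A\otimes B$. Then: (i) $C$ has length $n=n_a n_b$, dimension $k=n-m_b$ and covering radius $\rho=1$; (ii) if $n_a>1$ then the minimum distance of $C$ is $d=2$, and if $n_a=1$ then $d=3$; (iii) $\mathrm{Aut}(C)$ is transitive, and consequently $C$ is completely transitive and completely regular.
   Context: $\mathbb{F}_q$ is the finite field with $q$ elements. The repetition $[n,1,n]_q$ code is $\{(c,\dots,c):c\in\mathbb{F}_q\}$. For $m\ge2$, a $q$-ary Hamming code of length $(q^m-1)/(q-1)$ is a linear code with an $m\times (q^m-1)/(q-1)$ parity-check matrix whose columns are nonzero and pairwise linearly independent. The Kronecker product $A\otimes B$ of $A=[a_{r,s}]$ and $B$ is obtained by replacing each entry $a_{r,s}$ by the block $a_{r,s}B$. Covering radius $\rho=\max_{\bf v}\min_{{\bf x}\in C}d({\bf v},{\bf x})$ (Hamming distance). A linear automorphism of $\mathbb{F}_q^n$ is ${\bf x}\mapsto {\bf x}M$ with $M$ a monomial matrix; $\mathrm{Aut}(C)$ is the group of linear automorphisms preserving $C$; it is called transitive if it acts transitively on the set of weight-one vectors of $\mathbb{F}_q^n$. $\mathrm{Aut}(C)$ acts on cosets by $\phi({\bf v}+C)=\phi({\bf v})+C$; $C$ is completely transitive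 if this action has exactly $\rho+1$ orbits. $C$ is completely regular if for every vector ${\bf x}$, with $t=d({\bf x},C)$, the number of codewords at distance $i$ from ${\bf x}$ depends only on $t$ and $i$. *)

theory Defs
  imports Complex_Main "HOL-Library.Function_Algebras" "HOL-Library.Cardinality"
begin

text \<open>Vectors of length n over a finite field 'a are functions nat => 'a that vanish
outside {..<n}. Matrices are functions nat => nat => 'a with explicit dimensions.\<close>

definition vecs :: "nat \<Rightarrow> (nat \<Rightarrow> 'a::zero) set" where
  "vecs n = {v. \<forall>i\<ge>n. v i = 0}"

definition hdist :: "nat \<Rightarrow> (nat \<Rightarrow> 'a) \<Rightarrow> (nat \<Rightarrow> 'a) \<Rightarrow> nat" where
  "hdist n u v = card {i. i < n \<and> u i \<noteq> v i}"

definition hweight :: "nat \<Rightarrow> (nat \<Rightarrow> 'a::zero) \<Rightarrow> nat" where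
  "hweight n v = card {i. i < n \<and> v i \<noteq> 0}"

definition vscale :: "'a::field \<Rightarrow> (nat \<Rightarrow> 'a) \<Rightarrow> (nat \<Rightarrow> 'a)" where
  "vscale c v = (\<lambda>i. c * v i)"

definition code_dim :: "(nat \<Rightarrow> 'a::field) set \<Rightarrow> nat" where
  "code_dim C = vector_space.dim vscale C"

definition repetition_code :: "nat \<Rightarrow> (nat \<Rightarrow> 'a::zero) set" where
  "repetition_code n = {v. \<exists>c. \<forall>i. v i = (if i < n then c else 0)}"

definition row_space :: "nat \<Rightarrow> nat \<Rightarrow> (nat \<Rightarrow> nat \<Rightarrow> 'a::comm_ring_1) \<Rightarrow> (nat \<Rightarrow> 'a) set" where
  "row_space r n G = {v. \<exists>c. \<forall>j. v j = (if j < n then (\<Sum>i<r. c i * G i j) else 0)}"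

definition is_generator_matrix ::
  "nat \<Rightarrow> nat \<Rightarrow> (nat \<Rightarrow> nat \<Rightarrow> 'a::field) \<Rightarrow> (nat \<Rightarrow> 'a) set \<Rightarrow> bool" where
  "is_generator_matrix r n G C \<longleftrightarrow>
     row_space r n G = C \<and>
     (\<forall>c. (\<forall>j<n. (\<Sum>i<r. c i * G i j) = 0) \<longrightarrow> (\<forall>i<r. c i = 0))"

definition is_hamming_pcm :: "nat \<Rightarrow> nat \<Rightarrow> (nat \<Rightarrow> nat \<Rightarrow> 'a::{field,finite}) \<Rightarrow> bool" where
  "is_hamming_pcm m n B \<longleftrightarrow>
     m \<ge> 2 \<and> n = (CARD('a) ^ m - 1) div (CARD('a) - 1) \<and>
     (\<forall>j<n. \<exists>i<m. B i j \<noteq> 0) \<and>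
     (\<forall>j<n. \<forall>j'<n. j \<noteq> j' \<longrightarrow> \<not> (\<exists>c. \<forall>i<m. B i j = c * B i j'))"

text \<open>Kronecker product of A (with column count na) and B (m_b x n_b):
entry (r*mb+i, s*nb+j) is A r s * B i j.\<close>
definition kron :: "nat \<Rightarrow> nat \<Rightarrow> (nat \<Rightarrow> nat \<Rightarrow> 'a::times) \<Rightarrow> (nat \<Rightarrow> nat \<Rightarrow> 'a) \<Rightarrow> nat \<Rightarrow> nat \<Rightarrow> 'a" where
  "kron mb nb A B = (\<lambda>r c. A (r div mb) (c div nb) * B (r mod mb) (c mod nb))"

definition pcm_code :: "nat \<Rightarrow> nat \<Rightarrow> (nat \<Rightarrow> nat \<Rightarrow> 'a::comm_ring_1) \<Rightarrow> (nat \<Rightarrow> 'a) set" where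
  "pcm_code rows n H = {x \<in> vecs n. \<forall>i<rows. (\<Sum>j<n. H i j * x j) = 0}"

definition dist_to_code :: "nat \<Rightarrow> (nat \<Rightarrow> 'a) set \<Rightarrow> (nat \<Rightarrow> 'a) \<Rightarrow> nat" where
  "dist_to_code n C v = Min (hdist n v ` C)"

definition covering_radius :: "nat \<Rightarrow> (nat \<Rightarrow> 'a::zero) set \<Rightarrow> nat" where
  "covering_radius n C = Max (dist_to_code n C ` vecs n)"

definition min_distance :: "nat \<Rightarrow> (nat \<Rightarrow> 'a) set \<Rightarrow> nat" where
  "min_distance n C = Min {hdist n x y | x y. x \<in> C \<and> y \<in> C \<and> x \<noteq> y}"

definition monomial :: "nat \<Rightarrow> (nat \<Rightarrow> nat \<Rightarrow> 'a::zero) \<Rightarrow> bool" where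
  "monomial n M \<longleftrightarrow>
     (\<forall>i<n. \<exists>!j. j < n \<and> M i j \<noteq> 0) \<and> (\<forall>j<n. \<exists>!i. i < n \<and> M i j \<noteq> 0)"

definition vmul :: "nat \<Rightarrow> (nat \<Rightarrow> 'a::comm_semiring_0) \<Rightarrow> (nat \<Rightarrow> nat \<Rightarrow> 'a) \<Rightarrow> (nat \<Rightarrow> 'a)" where
  "vmul n x M = (\<lambda>j. if j < n then (\<Sum>i<n. x i * M i j) else 0)"

definition Aut :: "nat \<Rightarrow> (nat \<Rightarrow> 'a::comm_semiring_0) set \<Rightarrow> (nat \<Rightarrow> nat \<Rightarrow> 'a) set" where
  "Aut n C = {M. monomial n M \<and> (\<lambda>x. vmul n x M) ` C = C}"

definition aut_transitive :: "nat \<Rightarrow> (nat \<Rightarrow> 'a::comm_semiring_0) set \<Rightarrow> bool" where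
  "aut_transitive n C \<longleftrightarrow>
     (\<forall>u\<in>vecs n. \<forall>v\<in>vecs n. hweight n u = 1 \<and> hweight n v = 1 \<longrightarrow>
        (\<exists>M\<in>Aut n C. vmul n u M = v))"

definition coset :: "(nat \<Rightarrow> 'a::plus) set \<Rightarrow> (nat \<Rightarrow> 'a) \<Rightarrow> (nat \<Rightarrow> 'a) set" where
  "coset C v = (\<lambda>x. v + x) ` C"

definition coset_orbit :: "nat \<Rightarrow> (nat \<Rightarrow> 'a::comm_semiring_0) set \<Rightarrow> (nat \<Rightarrow> 'a) \<Rightarrow> (nat \<Rightarrow> 'a) set set" where
  "coset_orbit n C v = {coset C (vmul n v M) | M. M \<in> Aut n C}"

definition completely_transitive :: "nat \<Rightarrow> (nat \<Rightarrow> 'a::comm_semiring_0) set \<Rightarrow> bool" where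
  "completely_transitive n C \<longleftrightarrow>
     card (coset_orbit n C ` vecs n) = covering_radius n C + 1"

definition completely_regular :: "nat \<Rightarrow> (nat \<Rightarrow> 'a::zero) set \<Rightarrow> bool" where
  "completely_regular n C \<longleftrightarrow>
     (\<forall>x\<in>vecs n. \<forall>y\<in>vecs n. dist_to_code n C x = dist_to_code n C y \<longrightarrow>
        (\<forall>i. card {c\<in>C. hdist n x c = i} = card {c\<in>C. hdist n y c = i}))"

end

theory Submission
  imports Defs "HOL-Library.FuncSet"
begin

lemma vecs_finite: "finite (vecs n :: (nat \<Rightarrow> 'a::{zero,finite}) set)"
proof -
  have "vecs n \<subseteq> (\<lambda>f i. if i < n then f i else 0) ` ({..<n} \<rightarrow>\<^sub>E (UNIV::'a set))"
  proof
    fix v :: "nat \<Rightarrow> 'a" assume "v \<in> vecs n"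
    then have "v = (\<lambda>i. if i < n then restrict v {..<n} i else 0)"
      by (auto simp: vecs_def fun_eq_iff)
    then show "v \<in> (\<lambda>f i. if i < n then f i else 0) ` ({..<n} \<rightarrow>\<^sub>E (UNIV::'a set))"
      by (intro image_eqI[where x="restrict v {..<n}"]) auto
  qed
  then show ?thesis by (rule finite_subset) (intro finite_imageI finite_PiE; simp)
qed

lemma restrict_vecs_inj: "inj_on (\<lambda>v. restrict v {..<n}) (vecs n :: (nat \<Rightarrow> 'a::zero) set)"
proof (rule inj_onI)
  fix x y :: "nat \<Rightarrow> 'a"
  assume xy: "x \<in> vecs n" "y \<in> vecs n" and r: "restrict x {..<n} = restrict y {..<n}"
  show "x = y"
  proof (rule ext)
    fix i show "x i = y i"
    proof (cases "i < n")
      case True then show ?thesis using r by (metis lessThan_iff restrict_apply')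
    next
      case False then show ?thesis using xy by (simp add: vecs_def)
    qed
  qed
qed

lemma restrict_vecs_image: "(\<lambda>v. restrict v {..<n}) ` (vecs n :: (nat \<Rightarrow> 'a::zero) set) = ({..<n} \<rightarrow>\<^sub>E (UNIV :: 'a set))"
proof (intro equalityI subsetI)
  fix g :: "nat \<Rightarrow> 'a" assume "g \<in> (\<lambda>v. restrict v {..<n}) ` (vecs n :: (nat \<Rightarrow> 'a) set)"
  then obtain v :: "nat \<Rightarrow> 'a" where "g = restrict v {..<n}" by blast
  then show "g \<in> {..<n} \<rightarrow>\<^sub>E (UNIV :: 'a set)" by simp
next
  fix f :: "nat \<Rightarrow> 'a" assume f: "f \<in> {..<n} \<rightarrow>\<^sub>E (UNIV :: 'a set)"
  define v :: "nat \<Rightarrow> 'a" where "v = (\<lambda>i. if i < n then f i else 0)"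
  have "v \<in> vecs n" by (auto simp: vecs_def v_def)
  moreover have "restrict v {..<n} = f" using f
    by (auto simp: fun_eq_iff restrict_def PiE_def extensional_def v_def)
  ultimately show "f \<in> (\<lambda>v. restrict v {..<n}) ` (vecs n :: (nat \<Rightarrow> 'a) set)" by (metis image_eqI)
qed

lemma card_vecs: "card (vecs n :: (nat \<Rightarrow> 'a::{zero,finite}) set) = CARD('a) ^ n"
proof -
  have "card (vecs n :: (nat \<Rightarrow> 'a) set) = card ((\<lambda>v. restrict v {..<n}) ` (vecs n :: (nat \<Rightarrow> 'a) set))"
    using restrict_vecs_inj by (metis card_image)
  also have "\<dots> = card ({..<n} \<rightarrow>\<^sub>E (UNIV::'a set))" by (simp only: restrict_vecs_image)
  also have "\<dots> = CARD('a) ^ n" by (simp add: card_PiE)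
  finally show ?thesis .
qed

lemma dvd_pow_minus1: "(q::nat) \<ge> 1 \<Longrightarrow> (q - 1) dvd (q ^ m - 1)"
proof (induction m)
  case 0 then show ?case by simp
next
  case (Suc m)
  have "q ^ m \<ge> 1" using Suc.prems by simp
  then have "q ^ Suc m - 1 = q * (q ^ m - 1) + (q - 1)" using Suc.prems
    by (simp add: algebra_simps diff_mult_distrib2)
  moreover have "(q - 1) dvd q * (q ^ m - 1) + (q - 1)" using Suc.IH[OF Suc.prems] by simp
  ultimately show ?case by simp
qed

lemma card_field_ge2: "CARD('a::{field,finite}) \<ge> 2"
proof -
  have "card {0::'a, 1} = 2" by simp
  moreover have "card {0::'a, 1} \<le> CARD('a)" by (rule card_mono) auto
  ultimately show ?thesis by simp
qed

locale ham =
  fixes B :: "nat \<Rightarrow> nat \<Rightarrow> 'a::{field,finite}" and mb nb :: nat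
  assumes hpcm: "is_hamming_pcm mb nb B"
begin

definition col :: "nat \<Rightarrow> nat \<Rightarrow> 'a" where "col k = (\<lambda>i. if i < mb then B i k else 0)"

lemma mb2: "mb \<ge> 2" using hpcm by (simp add: is_hamming_pcm_def)

lemma nb_eq: "nb = (CARD('a)^mb - 1) div (CARD('a) - 1)" using hpcm by (simp add: is_hamming_pcm_def)

lemma col_vecs: "col k \<in> vecs mb" by (simp add: col_def vecs_def)

lemma col_nz: "k < nb \<Longrightarrow> col k \<noteq> 0"
  using hpcm unfolding is_hamming_pcm_def col_def fun_eq_iff by auto

lemma col_indep: "k < nb \<Longrightarrow> k' < nb \<Longrightarrow> k \<noteq> k' \<Longrightarrow> col k \<noteq> vscale c (col k')"
proof
  assume "k < nb" "k' < nb" "k \<noteq> k'" and e: "col k = vscale c (col k')"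
  then have "\<forall>i<mb. B i k = c * B i k'"
    by (auto simp: col_def vscale_def fun_eq_iff) (metis)
  with hpcm \<open>k < nb\<close> \<open>k' < nb\<close> \<open>k \<noteq> k'\<close> show False unfolding is_hamming_pcm_def by blast
qed

lemma nb_card: "nb * (CARD('a) - 1) = CARD('a)^mb - 1"
proof -
  have "(CARD('a) - 1) dvd (CARD('a)^mb - 1)" using card_field_ge2[where 'a='a] by (intro dvd_pow_minus1) auto
  then show ?thesis by (simp add: nb_eq)
qed

lemma col_surj:
  assumes v: "v \<in> vecs mb" "v \<noteq> 0"
  shows "\<exists>k<nb. \<exists>c. c \<noteq> 0 \<and> v = vscale c (col k)"
proof -
  define D where "D = {..<nb} \<times> (UNIV - {0::'a})"
  define g where "g = (\<lambda>(k, c). vscale c (col k))"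
  have cD: "card D = nb * (CARD('a) - 1)" by (simp add: D_def card_cartesian_product card_Diff_singleton)
  have inj: "inj_on g D"
  proof (rule inj_onI)
    fix x y assume "x \<in> D" "y \<in> D" "g x = g y"
    obtain k c where x: "x = (k, c)" by (cases x)
    obtain k' c' where y: "y = (k', c')" by (cases y)
    have k: "k < nb" "c \<noteq> 0" "k' < nb" "c' \<noteq> 0" using \<open>x \<in> D\<close> \<open>y \<in> D\<close> x y by (auto simp: D_def)
    have e: "vscale c (col k) = vscale c' (col k')" using \<open>g x = g y\<close> x y by (simp add: g_def)
    have "k = k'"
    proof (rule ccontr)
      assume "k \<noteq> k'"
      have "col k = vscale (c' / c) (col k')"
      proof (rule ext)
        fix i
        have "c * col k i = c' * col k' i" using e by (simp add: vscale_def fun_eq_iff)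
        then show "col k i = vscale (c' / c) (col k') i" using k by (simp add: vscale_def field_simps)
      qed
      then show False using col_indep[OF k(1) k(3) \<open>k \<noteq> k'\<close>] by blast
    qed
    moreover have "c = c'"
    proof -
      obtain i where "col k i \<noteq> 0" using col_nz[OF k(1)] by (auto simp: fun_eq_iff)
      moreover have "vscale c (col k) i = vscale c' (col k) i" using e \<open>k = k'\<close> by simp
      then have "c * col k i = c' * col k i" by (simp add: vscale_def)
      ultimately show ?thesis by simp
    qed
    ultimately show "x = y" using x y by simp
  qed
  have sub: "g ` D \<subseteq> vecs mb - {0}"
  proof
    fix w assume "w \<in> g ` D"
    then obtain k c where kc: "k < nb" "c \<noteq> 0" "w = vscale c (col k)" by (auto simp: D_def g_def)
    obtain i where "col k i \<noteq> 0" using col_nz[OF kc(1)] by (auto simp: fun_eq_iff)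
    then have "w i \<noteq> 0" using kc by (simp add: vscale_def)
    moreover have "w \<in> vecs mb" using kc by (simp add: vscale_def vecs_def col_def)
    ultimately show "w \<in> vecs mb - {0}" by auto
  qed
  have "card (vecs mb - {0::nat \<Rightarrow> 'a}) = CARD('a)^mb - 1"
  proof -
    have "(0::nat \<Rightarrow> 'a) \<in> vecs mb" by (simp add: vecs_def)
    then show ?thesis using card_vecs[of mb, where 'a='a] vecs_finite[of mb, where 'a='a]
      by (simp add: card_Diff_singleton)
  qed
  also have "\<dots> = card (g ` D)" using inj cD nb_card by (simp add: card_image)
  finally have "g ` D = vecs mb - {0}"
    using sub by (intro card_subset_eq) (auto intro: finite_Diff vecs_finite)
  then have "v \<in> g ` D" using v by auto
  then show ?thesis by (auto simp: D_def g_def)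
qed

end

lemma sum_fun_apply: "(\<Sum>x\<in>A. f x) j = (\<Sum>x\<in>A. f x j)"
  for f :: "'b \<Rightarrow> nat \<Rightarrow> 'a::comm_monoid_add"
proof (cases "finite A")
  case True then show ?thesis by (induction A rule: finite_induct) auto
next
  case False then show ?thesis by simp
qed

interpretation V: vector_space "vscale :: 'a::field \<Rightarrow> (nat \<Rightarrow> 'a) \<Rightarrow> (nat \<Rightarrow> 'a)"
  by unfold_locales (auto simp: vscale_def fun_eq_iff algebra_simps)

definition uv :: "nat \<Rightarrow> nat \<Rightarrow> 'a::zero_neq_one" where "uv p = (\<lambda>j. if j = p then 1 else 0)"

locale kr = ham B mb nb for B :: "nat \<Rightarrow> nat \<Rightarrow> 'a::{field,finite}" and mb nb +
  fixes na :: nat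
  assumes na1: "na \<ge> 1"
begin

definition N :: nat where "N = na * nb"

definition syn :: "(nat \<Rightarrow> 'a) \<Rightarrow> nat \<Rightarrow> 'a" where
  "syn x = (\<lambda>i. if i < mb then (\<Sum>j<N. B i (j mod nb) * x j) else 0)"

definition CC :: "(nat \<Rightarrow> 'a) set" where "CC = {x \<in> vecs N. syn x = 0}"

lemma syn_add: "syn (x + y) = syn x + syn y"
  by (auto simp: syn_def fun_eq_iff algebra_simps sum.distrib)

lemma syn_diff: "syn (x - y) = syn x - syn y"
  by (auto simp: syn_def fun_eq_iff algebra_simps sum_subtractf)

lemma syn_scale: "syn (vscale c x) = vscale c (syn x)"
  by (auto simp: syn_def fun_eq_iff vscale_def sum_distrib_left algebra_simps)

lemma syn_vecs: "syn x \<in> vecs mb" by (simp add: syn_def vecs_def)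

lemma vecs_add: "x \<in> vecs n \<Longrightarrow> y \<in> vecs n \<Longrightarrow> x + y \<in> vecs n"
  and vecs_diff: "x \<in> vecs n \<Longrightarrow> y \<in> vecs n \<Longrightarrow> x - y \<in> vecs n"
  and vecs_scale: "x \<in> vecs n \<Longrightarrow> vscale c x \<in> vecs n"
  for x y :: "nat \<Rightarrow> 'a"
  by (auto simp: vecs_def vscale_def)

lemma CC_add: "x \<in> CC \<Longrightarrow> y \<in> CC \<Longrightarrow> x + y \<in> CC"
  and CC_diff: "x \<in> CC \<Longrightarrow> y \<in> CC \<Longrightarrow> x - y \<in> CC"
  and CC_scale: "x \<in> CC \<Longrightarrow> vscale c x \<in> CC"
  and CC_zero: "0 \<in> CC"
  by (auto simp: CC_def syn_add syn_diff syn_scale vecs_add vecs_diff vecs_scale)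
     (auto simp: vecs_def syn_def vscale_def fun_eq_iff)

lemma CC_vecs: "CC \<subseteq> vecs N" by (auto simp: CC_def)

lemma CC_finite: "finite CC" using CC_vecs vecs_finite finite_subset by blast

lemma syn_single:
  assumes "p < N"
  shows "syn (vscale a (uv p)) = vscale a (col (p mod nb))"
proof (rule ext)
  fix i
  have "(\<Sum>j<N. B i (j mod nb) * vscale a (uv p) j) = B i (p mod nb) * a"
    using assms by (simp add: vscale_def uv_def if_distrib cong: if_cong)
  then show "syn (vscale a (uv p)) i = vscale a (col (p mod nb)) i"
    by (simp add: syn_def col_def vscale_def mult.commute)
qed

lemma single_vecs: "p < n \<Longrightarrow> vscale a (uv p) \<in> vecs n"
  by (simp add: vecs_def vscale_def uv_def)

lemma unit_col: "i < mb \<Longrightarrow> \<exists>k<nb. \<exists>l. l \<noteq> 0 \<and> col k = vscale l (uv i)"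
proof -
  assume i: "i < mb"
  have "(uv i :: nat \<Rightarrow> 'a) \<in> vecs mb" "(uv i :: nat \<Rightarrow> 'a) \<noteq> 0"
    using i by (auto simp: vecs_def uv_def fun_eq_iff)
  then obtain k c where k: "k < nb" "c \<noteq> 0" "uv i = vscale c (col k)" using col_surj by blast
  have "col k = vscale (1 / c) (uv i)" using k by (auto simp: vscale_def fun_eq_iff)
  then show ?thesis using k by (intro exI[of _ k]) (auto intro!: exI[of _ "1/c"])
qed

lemma nb_pos: "nb > 0" using unit_col[of 0] mb2 by auto

lemma N_pos: "N > 0" using nb_pos na1 by (simp add: N_def)

end


lemma hdist_zero: "x \<in> vecs n \<Longrightarrow> y \<in> vecs n \<Longrightarrow> hdist n x y = 0 \<Longrightarrow> x = y"
  for x y :: "nat \<Rightarrow> 'a::zero"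
proof -
  assume xy: "x \<in> vecs n" "y \<in> vecs n" "hdist n x y = 0"
  then have "{i. i < n \<and> x i \<noteq> y i} = {}" by (simp add: hdist_def)
  show "x = y"
  proof (rule ext)
    fix i show "x i = y i"
    proof (cases "i < n")
      case True then show ?thesis using \<open>{i. i < n \<and> x i \<noteq> y i} = {}\<close> by blast
    next
      case False then show ?thesis using xy(1,2) by (simp add: vecs_def)
    qed
  qed
qed

lemma hdist_self: "hdist n x x = 0" by (simp add: hdist_def)

context kr
begin

lemma hdist_single:
  assumes "p < N" "a \<noteq> 0"
  shows "hdist N x (x - vscale a (uv p)) = 1"
proof -
  have "{i. i < N \<and> x i \<noteq> (x - vscale a (uv p)) i} = {p}"
    using assms by (auto simp: vscale_def uv_def)
  then show ?thesis by (simp add: hdist_def)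
qed

lemma uv_scale1: "uv p = vscale 1 (uv p)" by (simp add: vscale_def)

lemma single_notin: "p < N \<Longrightarrow> a \<noteq> 0 \<Longrightarrow> vscale a (uv p) \<notin> CC"
proof
  assume "p < N" "a \<noteq> 0" "vscale a (uv p) \<in> CC"
  then have "vscale a (col (p mod nb)) = 0" using syn_single by (simp add: CC_def)
  moreover obtain i where "col (p mod nb) i \<noteq> 0" using col_nz[of "p mod nb"] nb_pos
    by (auto simp: fun_eq_iff)
  ultimately show False using \<open>a \<noteq> 0\<close> by (auto simp: vscale_def fun_eq_iff)
qed

lemma not_CC_decomp:
  assumes "x \<in> vecs N" "x \<notin> CC"
  shows "\<exists>p<N. \<exists>a. a \<noteq> 0 \<and> x - vscale a (uv p) \<in> CC"
proof -
  have "syn x \<noteq> 0" using assms by (simp add: CC_def)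
  then obtain k c where k: "k < nb" "c \<noteq> 0" "syn x = vscale c (col k)"
    using col_surj syn_vecs by blast
  have "nb \<le> N" using na1 by (simp add: N_def)
  then have kN: "k < N" using k by linarith
  have "syn (x - vscale c (uv k)) = 0" using k kN by (simp add: syn_diff syn_single)
  moreover have "x - vscale c (uv k) \<in> vecs N" using assms kN by (simp add: vecs_diff single_vecs)
  ultimately show ?thesis using k kN by (auto simp: CC_def)
qed

lemma dist_in: "x \<in> CC \<Longrightarrow> dist_to_code N CC x = 0"
  unfolding dist_to_code_def
  by (rule Min_eqI) (auto simp: CC_finite hdist_self intro: image_eqI[of _ _ x])

lemma dist_out:
  assumes "x \<in> vecs N" "x \<notin> CC"
  shows "dist_to_code N CC x = 1"
  unfolding dist_to_code_def
proof (rule Min_eqI)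
  show "finite (hdist N x ` CC)" using CC_finite by simp
  show "\<And>y. y \<in> hdist N x ` CC \<Longrightarrow> 1 \<le> y"
  proof -
    fix y assume "y \<in> hdist N x ` CC"
    then obtain c where c: "c \<in> CC" "y = hdist N x c" by auto
    have "y \<noteq> 0" using hdist_zero[of x N c] c assms CC_vecs by auto
    then show "1 \<le> y" by simp
  qed
  obtain p a where pa: "p < N" "a \<noteq> 0" "x - vscale a (uv p) \<in> CC" using not_CC_decomp assms by blast
  show "1 \<in> hdist N x ` CC" using hdist_single[OF pa(1,2), of x] pa(3) by (metis image_eqI)
qed

lemma cov_rad: "covering_radius N CC = 1"
  unfolding covering_radius_def
proof (rule Max_eqI)
  show "finite (dist_to_code N CC ` vecs N)" by (intro finite_imageI vecs_finite)
  show "\<And>y. y \<in> dist_to_code N CC ` vecs N \<Longrightarrow> y \<le> 1"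
  proof -
    fix y assume "y \<in> dist_to_code N CC ` vecs N"
    then obtain x where x: "x \<in> vecs N" "y = dist_to_code N CC x" by blast
    show "y \<le> 1"
    proof (cases "x \<in> CC")
      case True then show ?thesis using x dist_in by simp
    next
      case False then show ?thesis using x dist_out by simp
    qed
  qed
  have "(uv 0 :: nat \<Rightarrow> 'a) \<in> vecs N" "(uv 0 :: nat \<Rightarrow> 'a) \<notin> CC" using single_vecs[of 0 N 1] single_notin[of 0 1] N_pos uv_scale1 by auto
  then show "1 \<in> dist_to_code N CC ` vecs N" using dist_out by (metis image_eqI)
qed

end

context kr
begin

lemma syn_support:
  assumes "z \<in> vecs N" "i < mb"
  shows "syn z i = (\<Sum>j\<in>{j. j < N \<and> z j \<noteq> 0}. B i (j mod nb) * z j)"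
proof -
  have "(\<Sum>j<N. B i (j mod nb) * z j) = (\<Sum>j\<in>{j. j < N \<and> z j \<noteq> 0}. B i (j mod nb) * z j)"
    by (rule sum.mono_neutral_right) auto
  then show ?thesis using assms by (simp add: syn_def)
qed

lemma weight_lb:
  assumes z: "z \<in> CC" "z \<noteq> 0"
  shows "card {j. j < N \<and> z j \<noteq> 0} \<ge> 2 \<and> (na = 1 \<longrightarrow> card {j. j < N \<and> z j \<noteq> 0} \<ge> 3)"
proof -
  define S where "S = {j. j < N \<and> z j \<noteq> 0}"
  have zv: "z \<in> vecs N" and sz: "syn z = 0" using z by (auto simp: CC_def)
  have fS: "finite S" by (simp add: S_def)
  have S0: "S \<noteq> {}"
  proof
    assume "S = {}"
    have "z = 0"
    proof (rule ext)
      fix j show "z j = 0 j"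
      proof (cases "j < N")
        case True then show ?thesis using \<open>S = {}\<close> by (auto simp: S_def)
      next
        case False then show ?thesis using zv by (simp add: vecs_def)
      qed
    qed
    then show False using z by simp
  qed
  have c1: "card S \<noteq> 1"
  proof
    assume "card S = 1"
    then obtain p where p: "S = {p}" by (rule card_1_singletonE)
    then have pN: "p < N" "z p \<noteq> 0" by (auto simp: S_def)
    have "\<forall>i<mb. B i (p mod nb) * z p = 0"
    proof (intro allI impI)
      fix i assume "i < mb"
      have "syn z i = B i (p mod nb) * z p"
        using syn_support[OF zv \<open>i < mb\<close>] p by (simp add: S_def[symmetric])
      then show "B i (p mod nb) * z p = 0" using sz by simp
    qed
    then have "\<forall>i. col (p mod nb) i = 0" using pN by (auto simp: col_def)
    then show False using col_nz[of "p mod nb"] nb_pos by (auto simp: fun_eq_iff)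
  qed
  have c2: "na = 1 \<Longrightarrow> card S \<noteq> 2"
  proof
    assume "na = 1" "card S = 2"
    have NN: "N = nb" unfolding N_def using \<open>na = 1\<close> by simp
    obtain p p' where p: "S = {p, p'}" "p \<noteq> p'" using \<open>card S = 2\<close> card_2_iff by metis
    have pN: "p < nb" "z p \<noteq> 0" "p' < nb" "z p' \<noteq> 0" using p NN by (auto simp: S_def)
    have "\<forall>i<mb. B i p * z p + B i p' * z p' = 0"
    proof (intro allI impI)
      fix i assume "i < mb"
      have "syn z i = B i (p mod nb) * z p + B i (p' mod nb) * z p'"
        using syn_support[OF zv \<open>i < mb\<close>] p by (simp add: S_def[symmetric])
      then show "B i p * z p + B i p' * z p' = 0" using sz pN by simp
    qed
    then have "col p = vscale (- z p' / z p) (col p')"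
      using pN by (auto simp: col_def vscale_def fun_eq_iff field_simps eq_neg_iff_add_eq_0 algebra_simps)
    then show False using col_indep pN p(2) by blast
  qed
  have "card S \<noteq> 0" using fS S0 by simp
  then have "card S \<ge> 2 \<and> (na = 1 \<longrightarrow> card S \<ge> 3)" using c1 c2 by linarith
  then show ?thesis unfolding S_def .
qed

lemma hdist_diff: "hdist n x y = card {j. j < n \<and> (x - y) j \<noteq> 0}" for x y :: "nat \<Rightarrow> 'a"
  by (simp add: hdist_def)

lemma mind_lb:
  assumes "x \<in> CC" "y \<in> CC" "x \<noteq> y"
  shows "hdist N x y \<ge> 2 \<and> (na = 1 \<longrightarrow> hdist N x y \<ge> 3)"
proof -
  have "x - y \<in> CC" "x - y \<noteq> 0" using assms CC_diff by auto
  then have "card {j. j < N \<and> (x - y) j \<noteq> 0} \<ge> 2 \<and> (na = 1 \<longrightarrow> card {j. j < N \<and> (x - y) j \<noteq> 0} \<ge> 3)"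
    by (rule weight_lb)
  then show ?thesis unfolding hdist_diff .
qed

lemma mind_set_finite: "finite {hdist N x y | x y. x \<in> CC \<and> y \<in> CC \<and> x \<noteq> y}"
proof -
  have "{hdist N x y | x y. x \<in> CC \<and> y \<in> CC \<and> x \<noteq> y} \<subseteq> (\<lambda>p. hdist N (fst p) (snd p)) ` (CC \<times> CC)"
  proof
    fix d assume "d \<in> {hdist N x y | x y. x \<in> CC \<and> y \<in> CC \<and> x \<noteq> y}"
    then obtain x y where "d = hdist N x y" "x \<in> CC" "y \<in> CC" by blast
    then show "d \<in> (\<lambda>p. hdist N (fst p) (snd p)) ` (CC \<times> CC)" by (intro image_eqI[of _ _ "(x, y)"]) auto
  qed
  moreover have "finite ((\<lambda>p. hdist N (fst p) (snd p)) ` (CC \<times> CC))" using CC_finite by simp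
  ultimately show ?thesis by (rule finite_subset)
qed

lemma syn_uv: "p < N \<Longrightarrow> syn (uv p) = col (p mod nb)"
proof -
  assume "p < N"
  have "syn (vscale 1 (uv p)) = vscale 1 (col (p mod nb))" using syn_single[OF \<open>p < N\<close>] .
  moreover have "vscale 1 (uv p) = uv p" "vscale 1 (col (p mod nb)) = col (p mod nb)" by (simp_all add: vscale_def)
  ultimately show ?thesis by simp
qed

lemma mind_na2:
  assumes "na > 1"
  shows "min_distance N CC = 2"
  unfolding min_distance_def
proof (rule Min_eqI[OF mind_set_finite])
  show "\<And>d. d \<in> {hdist N x y | x y. x \<in> CC \<and> y \<in> CC \<and> x \<noteq> y} \<Longrightarrow> 2 \<le> d"
  proof -
    fix d assume "d \<in> {hdist N x y | x y. x \<in> CC \<and> y \<in> CC \<and> x \<noteq> y}"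
    then obtain x y where "d = hdist N x y" "x \<in> CC" "y \<in> CC" "x \<noteq> y" by blast
    then show "2 \<le> d" using mind_lb by simp
  qed
  define x :: "nat \<Rightarrow> 'a" where "x = uv 0 - uv nb"
  have nbN: "nb < N" using assms nb_pos by (simp add: N_def)
  have "x \<in> vecs N" using nbN N_pos by (simp add: x_def vecs_def uv_def)
  moreover have "syn x = 0" using nbN N_pos
    by (simp add: x_def syn_diff syn_uv)
  ultimately have xC: "x \<in> CC" by (simp add: CC_def)
  have s: "{j. j < N \<and> (x - 0) j \<noteq> 0} = {0, nb}" using nbN nb_pos by (auto simp: x_def uv_def)
  have "hdist N x 0 = 2" unfolding hdist_diff s using nb_pos by simp
  moreover have "x \<noteq> 0" using nb_pos by (auto simp: x_def uv_def fun_eq_iff)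
  ultimately show "2 \<in> {hdist N x y | x y. x \<in> CC \<and> y \<in> CC \<and> x \<noteq> y}" using xC CC_zero by (intro CollectI exI[of _ x] exI[of _ 0]) simp
qed

end

context kr
begin

lemma mind_na1:
  assumes "na = 1"
  shows "min_distance N CC = 3"
  unfolding min_distance_def
proof (rule Min_eqI[OF mind_set_finite])
  show "\<And>d. d \<in> {hdist N x y | x y. x \<in> CC \<and> y \<in> CC \<and> x \<noteq> y} \<Longrightarrow> 3 \<le> d"
  proof -
    fix d assume "d \<in> {hdist N x y | x y. x \<in> CC \<and> y \<in> CC \<and> x \<noteq> y}"
    then obtain x y where "d = hdist N x y" "x \<in> CC" "y \<in> CC" "x \<noteq> y" by blast
    then show "3 \<le> d" using mind_lb assms by simp
  qed
  have NN: "N = nb" unfolding N_def using assms by simp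
  have m01: "0 < mb" "1 < mb" using mb2 by auto
  obtain q0 l0 where q0: "q0 < nb" "l0 \<noteq> 0" "col q0 = vscale l0 (uv 0)" using unit_col[OF m01(1)] by blast
  obtain q1 l1 where q1: "q1 < nb" "l1 \<noteq> 0" "col q1 = vscale l1 (uv 1)" using unit_col[OF m01(2)] by blast
  have c00: "col q0 0 = l0" "col q0 1 = 0" "col q1 0 = 0" "col q1 1 = l1"
    using q0 q1 by (simp_all add: vscale_def uv_def)
  have "col q0 + col q1 \<in> vecs mb" using col_vecs vecs_add by blast
  moreover have "col q0 + col q1 \<noteq> 0"
  proof
    assume "col q0 + col q1 = 0"
    then have "(col q0 + col q1) 0 = 0" by simp
    then show False using c00 q0 by simp
  qed
  ultimately obtain r c where r: "r < nb" "c \<noteq> 0" "col q0 + col q1 = vscale c (col r)"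
    using col_surj by blast
  have "q0 \<noteq> q1" using c00 q0 by auto
  have "r \<noteq> q0"
  proof
    assume "r = q0"
    then have "(col q0 + col q1) 1 = vscale c (col q0) 1" using r by simp
    then show False using c00 q1 by (simp add: vscale_def)
  qed
  have "r \<noteq> q1"
  proof
    assume "r = q1"
    then have "(col q0 + col q1) 0 = vscale c (col q1) 0" using r by simp
    then show False using c00 q0 by (simp add: vscale_def)
  qed
  define x :: "nat \<Rightarrow> 'a" where "x = uv q0 + uv q1 - vscale c (uv r)"
  have xv: "x \<in> vecs N" using q0 q1 r NN by (simp add: x_def vecs_def uv_def vscale_def)
  have "syn x = col q0 + col q1 - vscale c (col r)"
    using q0 q1 r NN by (simp add: x_def syn_diff syn_add syn_uv syn_single)
  then have "syn x = 0" using r by simp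
  with xv have xC: "x \<in> CC" by (simp add: CC_def)
  have s: "{j. j < N \<and> (x - 0) j \<noteq> 0} = {q0, q1, r}"
  proof (intro equalityI subsetI)
    fix j assume "j \<in> {j. j < N \<and> (x - 0) j \<noteq> 0}"
    then have "x j \<noteq> 0" by simp
    then show "j \<in> {q0, q1, r}" by (rule contrapos_np) (simp add: x_def uv_def vscale_def)
  next
    fix j assume "j \<in> {q0, q1, r}"
    then consider "j = q0" | "j = q1" | "j = r" by blast
    then show "j \<in> {j. j < N \<and> (x - 0) j \<noteq> 0}"
    proof cases
      case 1 then show ?thesis using q0 NN \<open>q0 \<noteq> q1\<close> \<open>r \<noteq> q0\<close> by (simp add: x_def uv_def vscale_def)
    next
      case 2 then show ?thesis using q1 NN \<open>q0 \<noteq> q1\<close> \<open>r \<noteq> q1\<close> by (simp add: x_def uv_def vscale_def)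
    next
      case 3 then show ?thesis using r NN \<open>r \<noteq> q0\<close> \<open>r \<noteq> q1\<close> by (simp add: x_def uv_def vscale_def)
    qed
  qed
  have "hdist N x 0 = 3" unfolding hdist_diff s using \<open>q0 \<noteq> q1\<close> \<open>r \<noteq> q0\<close> \<open>r \<noteq> q1\<close> by simp
  moreover have "x \<noteq> 0"
  proof
    assume "x = 0"
    then have "x q0 = 0" by simp
    then show False using \<open>q0 \<noteq> q1\<close> \<open>r \<noteq> q0\<close> by (simp add: x_def uv_def vscale_def)
  qed
  ultimately show "3 \<in> {hdist N x y | x y. x \<in> CC \<and> y \<in> CC \<and> x \<noteq> y}"
    using xC CC_zero by (intro CollectI exI[of _ x] exI[of _ 0]) simp
qed

end

context kr
begin

lemma syn_zero: "syn 0 = 0" by (simp add: syn_def fun_eq_iff)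

lemma syn_sum: "finite A \<Longrightarrow> syn (\<Sum>a\<in>A. f a) = (\<Sum>a\<in>A. syn (f a))"
proof (induction A rule: finite_induct)
  case empty show ?case by (simp only: sum.empty syn_zero)
next
  case (insert a A) then show ?case by (simp only: sum.insert[OF insert.hyps] syn_add)
qed

lemma CC_sum: "finite A \<Longrightarrow> (\<And>a. a \<in> A \<Longrightarrow> f a \<in> CC) \<Longrightarrow> (\<Sum>a\<in>A. f a) \<in> CC"
proof (induction A rule: finite_induct)
  case empty show ?case by (simp only: sum.empty CC_zero)
next
  case (insert a A) then show ?case by (simp only: sum.insert[OF insert.hyps]) (intro CC_add; simp)
qed

definition qk :: "nat \<Rightarrow> nat" where
  "qk i = (SOME k. k < nb \<and> (\<exists>l. l \<noteq> 0 \<and> col k = vscale l (uv i)))"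

definition lam :: "nat \<Rightarrow> 'a" where
  "lam i = (SOME l. l \<noteq> 0 \<and> col (qk i) = vscale l (uv i))"

lemma qk_prop: "i < mb \<Longrightarrow> qk i < nb \<and> lam i \<noteq> 0 \<and> col (qk i) = vscale (lam i) (uv i)"
proof -
  assume "i < mb"
  then have "\<exists>k. k < nb \<and> (\<exists>l. l \<noteq> 0 \<and> col k = vscale l (uv i))" using unit_col by blast
  then have a: "qk i < nb \<and> (\<exists>l. l \<noteq> 0 \<and> col (qk i) = vscale l (uv i))"
    unfolding qk_def by (rule someI_ex)
  then obtain l where "l \<noteq> 0 \<and> col (qk i) = vscale l (uv i)" by blast
  then have "lam i \<noteq> 0 \<and> col (qk i) = vscale (lam i) (uv i)"
    unfolding lam_def by (rule someI)
  with a show ?thesis by blast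
qed

lemma qk_B: "i < mb \<Longrightarrow> i0 < mb \<Longrightarrow> B i0 (qk i) = (if i0 = i then lam i else 0)"
proof -
  assume "i < mb" "i0 < mb"
  then have "col (qk i) i0 = vscale (lam i) (uv i) i0" using qk_prop by simp
  then show ?thesis using \<open>i0 < mb\<close> by (simp add: col_def vscale_def uv_def)
qed

lemma qk_inj: "inj_on qk {..<mb}"
proof (rule inj_onI)
  fix i i' assume ii: "i \<in> {..<mb}" "i' \<in> {..<mb}" "qk i = qk i'"
  show "i = i'"
  proof (rule ccontr)
    assume "i \<noteq> i'"
    have "B i (qk i) = lam i" using ii qk_B[of i i] by simp
    moreover have "B i (qk i') = 0" using ii qk_B \<open>i \<noteq> i'\<close> by simp
    ultimately show False using ii qk_prop[of i] by simp
  qed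
qed

definition PP :: "nat set" where "PP = qk ` {..<mb}"
definition KK :: "nat set" where "KK = {..<N} - PP"

lemma nb_le_N: "nb \<le> N" using na1 by (simp add: N_def)

lemma PP_sub: "PP \<subseteq> {..<N}" using qk_prop nb_le_N by (auto simp: PP_def) (meson less_le_trans)

lemma card_PP: "card PP = mb" using qk_inj by (simp add: PP_def card_image)

lemma card_KK: "card KK = N - mb"
  using PP_sub card_PP by (simp add: KK_def card_Diff_subset finite_subset)

definition bv :: "nat \<Rightarrow> nat \<Rightarrow> 'a" where
  "bv k = uv k - (\<Sum>i<mb. vscale (B i (k mod nb) / lam i) (uv (qk i)))"

lemma col_expand: "col k = (\<Sum>i<mb. vscale (B i k) (uv i))"
proof (rule ext)
  fix j
  show "col k j = (\<Sum>i<mb. vscale (B i k) (uv i)) j"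
    by (simp add: sum_fun_apply col_def vscale_def uv_def if_distrib cong: if_cong)
qed

lemma bv_CC: "k < N \<Longrightarrow> bv k \<in> CC"
proof -
  assume k: "k < N"
  have v1: "uv k \<in> vecs N" using k by (simp add: uv_def vecs_def)
  have v2: "(\<Sum>i<mb. vscale (B i (k mod nb) / lam i) (uv (qk i))) \<in> vecs N"
  proof -
    have "\<forall>j\<ge>N. (\<Sum>i<mb. vscale (B i (k mod nb) / lam i) (uv (qk i))) j = 0"
    proof (intro allI impI)
      fix j assume "N \<le> j"
      have "\<forall>i\<in>{..<mb}. vscale (B i (k mod nb) / lam i) (uv (qk i)) j = 0"
      proof
        fix i assume "i \<in> {..<mb}"
        then have "qk i \<noteq> j" using qk_prop[of i] nb_le_N \<open>N \<le> j\<close> by auto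
        then show "vscale (B i (k mod nb) / lam i) (uv (qk i)) j = 0" by (simp add: vscale_def uv_def)
      qed
      then show "(\<Sum>i<mb. vscale (B i (k mod nb) / lam i) (uv (qk i))) j = 0" by (simp add: sum_fun_apply)
    qed
    then show ?thesis by (simp add: vecs_def)
  qed
  have "syn (\<Sum>i<mb. vscale (B i (k mod nb) / lam i) (uv (qk i)))
      = (\<Sum>i<mb. vscale (B i (k mod nb) / lam i) (syn (uv (qk i))))"
    by (simp add: syn_sum syn_scale)
  also have "\<dots> = (\<Sum>i<mb. vscale (B i (k mod nb) / lam i) (vscale (lam i) (uv i)))"
  proof (rule sum.cong[OF refl])
    fix i assume "i \<in> {..<mb}"
    then have "qk i < N" "qk i < nb" "col (qk i) = vscale (lam i) (uv i)" using qk_prop nb_le_N by (auto intro: less_le_trans)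
    then show "vscale (B i (k mod nb) / lam i) (syn (uv (qk i))) = vscale (B i (k mod nb) / lam i) (vscale (lam i) (uv i))"
      by (simp add: syn_uv)
  qed
  also have "\<dots> = (\<Sum>i<mb. vscale (B i (k mod nb)) (uv i))"
    using qk_prop by (intro sum.cong refl) (simp add: vscale_def fun_eq_iff)
  also have "\<dots> = col (k mod nb)" by (simp add: col_expand)
  finally have "syn (bv k) = 0" using k by (simp add: bv_def syn_diff syn_uv)
  moreover have "bv k \<in> vecs N" unfolding bv_def by (rule vecs_diff[OF v1 v2])
  ultimately show ?thesis by (simp add: CC_def)
qed

lemma bv_eval: "k \<in> KK \<Longrightarrow> k0 \<in> KK \<Longrightarrow> bv k k0 = (if k0 = k then 1 else 0)"
proof -
  assume kk: "k \<in> KK" "k0 \<in> KK"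
  have "\<forall>i<mb. k0 \<noteq> qk i" using kk by (auto simp: KK_def PP_def)
  then show ?thesis by (simp add: bv_def sum_fun_apply vscale_def uv_def)
qed

lemma bv_inj: "inj_on bv KK"
proof (rule inj_onI)
  fix k k' assume "k \<in> KK" "k' \<in> KK" "bv k = bv k'"
  then have "bv k k = bv k' k" by simp
  then show "k = k'" using bv_eval \<open>k \<in> KK\<close> \<open>k' \<in> KK\<close> by (simp split: if_splits)
qed

lemma KK_finite: "finite KK" by (simp add: KK_def)

lemma CC_span: "x \<in> CC \<Longrightarrow> x \<in> V.span (bv ` KK)"
proof -
  assume x: "x \<in> CC"
  define y where "y = x - (\<Sum>k\<in>KK. vscale (x k) (bv k))"
  have KN: "\<And>k. k \<in> KK \<Longrightarrow> k < N" by (auto simp: KK_def)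
  have yC: "y \<in> CC" unfolding y_def
    using x KK_finite bv_CC KN by (intro CC_diff CC_sum CC_scale) auto
  have yK: "\<And>k0. k0 \<in> KK \<Longrightarrow> y k0 = 0"
  proof -
    fix k0 assume k0: "k0 \<in> KK"
    have "(\<Sum>k\<in>KK. vscale (x k) (bv k)) k0 = (\<Sum>k\<in>KK. x k * (if k0 = k then 1 else 0))"
      by (simp add: sum_fun_apply vscale_def bv_eval k0 cong: sum.cong)
    also have "\<dots> = x k0" using k0 KK_finite by (simp add: if_distrib cong: if_cong)
    finally show "y k0 = 0" by (simp add: y_def)
  qed
  have yv: "y \<in> vecs N" using yC CC_vecs by auto
  have yP: "\<And>i. i < mb \<Longrightarrow> y (qk i) = 0"
  proof -
    fix i0 assume i0: "i0 < mb"
    have "0 = syn y i0" using yC by (simp add: CC_def)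
    also have "\<dots> = (\<Sum>j<N. B i0 (j mod nb) * y j)" using i0 by (simp add: syn_def)
    also have "\<dots> = (\<Sum>j\<in>PP. B i0 (j mod nb) * y j)"
    proof (rule sum.mono_neutral_right)
      show "finite {..<N}" by simp
      show "PP \<subseteq> {..<N}" by (rule PP_sub)
      show "\<forall>j\<in>{..<N} - PP. B i0 (j mod nb) * y j = 0" using yK by (simp add: KK_def)
    qed
    also have "\<dots> = (\<Sum>i<mb. B i0 (qk i mod nb) * y (qk i))"
      unfolding PP_def using qk_inj by (simp add: sum.reindex)
    also have "\<dots> = (\<Sum>i<mb. (if i0 = i then lam i * y (qk i) else 0))"
      using qk_prop qk_B i0 by (intro sum.cong refl) simp
    also have "\<dots> = lam i0 * y (qk i0)" using i0 by simp
    finally show "y (qk i0) = 0" using qk_prop i0 by simp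
  qed
  have "y = 0"
  proof (rule ext)
    fix j show "y j = 0 j"
    proof (cases "j < N")
      case True
      show ?thesis
      proof (cases "j \<in> PP")
        case True then show ?thesis using yP by (auto simp: PP_def)
      next
        case False then show ?thesis using \<open>j < N\<close> yK by (simp add: KK_def)
      qed
    next
      case False then show ?thesis using yv by (simp add: vecs_def)
    qed
  qed
  then have "x = (\<Sum>k\<in>KK. vscale (x k) (bv k))" by (simp add: y_def)
  also have "\<dots> \<in> V.span (bv ` KK)"
    by (intro V.span_sum V.span_scale V.span_base) auto
  finally show ?thesis .
qed

lemma bv_indep: "V.independent (bv ` KK)"
proof
  assume "V.dependent (bv ` KK)"
  then obtain u where u: "\<exists>v\<in>bv ` KK. u v \<noteq> 0" "(\<Sum>v\<in>bv ` KK. vscale (u v) v) = 0"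
    using V.dependent_finite KK_finite by blast
  have s: "(\<Sum>k\<in>KK. vscale (u (bv k)) (bv k)) = 0"
    using u(2) bv_inj by (simp add: sum.reindex)
  have "\<And>k0. k0 \<in> KK \<Longrightarrow> u (bv k0) = 0"
  proof -
    fix k0 assume k0: "k0 \<in> KK"
    have "0 = (\<Sum>k\<in>KK. vscale (u (bv k)) (bv k)) k0" using s by simp
    also have "\<dots> = (\<Sum>k\<in>KK. u (bv k) * (if k0 = k then 1 else 0))"
      by (simp add: sum_fun_apply vscale_def bv_eval k0 cong: sum.cong)
    also have "\<dots> = u (bv k0)" using k0 KK_finite by (simp add: if_distrib cong: if_cong)
    finally show "u (bv k0) = 0" by simp
  qed
  then show False using u(1) by auto
qed

lemma dim_CC: "code_dim CC = N - mb"
  unfolding code_dim_def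
proof (rule V.dim_unique)
  show "bv ` KK \<subseteq> CC" using bv_CC by (auto simp: KK_def)
  show "CC \<subseteq> V.span (bv ` KK)" using CC_span by blast
  show "V.independent (bv ` KK)" by (rule bv_indep)
  show "card (bv ` KK) = N - mb" using bv_inj card_KK by (simp add: card_image)
qed

end

context kr
begin

definition mm :: "(nat \<Rightarrow> nat) \<Rightarrow> (nat \<Rightarrow> 'a) \<Rightarrow> nat \<Rightarrow> nat \<Rightarrow> 'a" where
  "mm \<rho> d = (\<lambda>i j. if i < N \<and> j < N \<and> j = \<rho> i then d i else 0)"

lemma vmul_out: "\<not> j < n \<Longrightarrow> vmul n x M j = 0" by (simp add: vmul_def)

lemma vmul_vecs: "vmul n x M \<in> vecs n" by (simp add: vmul_def vecs_def)

lemma vmul_mm: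
  assumes \<rho>: "bij_betw \<rho> {..<N} {..<N}" and i: "i < N"
  shows "vmul N x (mm \<rho> d) (\<rho> i) = x i * d i"
proof -
  have \<rho>i: "\<rho> i < N" using \<rho> i by (auto dest: bij_betw_apply)
  have inj: "inj_on \<rho> {..<N}" using \<rho> by (simp add: bij_betw_def)
  have "(\<Sum>i'<N. x i' * mm \<rho> d i' (\<rho> i)) = (\<Sum>i'<N. if i' = i then x i * d i else 0)"
  proof (rule sum.cong[OF refl])
    fix i' assume "i' \<in> {..<N}"
    then have "(\<rho> i = \<rho> i') = (i' = i)" using inj i by (auto dest: inj_onD)
    then show "x i' * mm \<rho> d i' (\<rho> i) = (if i' = i then x i * d i else 0)"
      using \<open>i' \<in> {..<N}\<close> \<rho>i by (auto simp: mm_def)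
  qed
  also have "\<dots> = x i * d i" using i by simp
  finally show ?thesis using \<rho>i by (simp add: vmul_def)
qed

lemma bij_cover: "bij_betw \<rho> {..<N} {..<N} \<Longrightarrow> j < N \<Longrightarrow> \<exists>i<N. j = \<rho> i"
  by (metis bij_betw_imp_surj_on imageE lessThan_iff)

lemma mm_monomial:
  assumes \<rho>: "bij_betw \<rho> {..<N} {..<N}" and d: "\<forall>i<N. d i \<noteq> 0"
  shows "monomial N (mm \<rho> d)"
  unfolding monomial_def
proof (intro conjI allI impI)
  have inj: "inj_on \<rho> {..<N}" using \<rho> by (simp add: bij_betw_def)
  fix i assume i: "i < N"
  have "\<rho> i < N" using \<rho> i by (auto dest: bij_betw_apply)
  then show "\<exists>!j. j < N \<and> mm \<rho> d i j \<noteq> 0"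
    using i d by (intro ex1I[of _ "\<rho> i"]) (auto simp: mm_def split: if_splits)
next
  have inj: "inj_on \<rho> {..<N}" using \<rho> by (simp add: bij_betw_def)
  fix j assume j: "j < N"
  obtain i where i: "i < N" "j = \<rho> i" using bij_cover[OF \<rho> j] by blast
  show "\<exists>!i. i < N \<and> mm \<rho> d i j \<noteq> 0"
  proof (rule ex1I[of _ i])
    show "i < N \<and> mm \<rho> d i j \<noteq> 0" using i j d by (simp add: mm_def)
    fix i' assume "i' < N \<and> mm \<rho> d i' j \<noteq> 0"
    then have "i' < N" "\<rho> i' = \<rho> i" using i by (auto simp: mm_def split: if_splits)
    then show "i' = i" using inj i by (auto dest: inj_onD)
  qed
qed

lemma mm_hdist:
  assumes \<rho>: "bij_betw \<rho> {..<N} {..<N}" and d: "\<forall>i<N. d i \<noteq> 0"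
  shows "hdist N (vmul N x (mm \<rho> d)) (vmul N y (mm \<rho> d)) = hdist N x y"
proof -
  have inj: "inj_on \<rho> {..<N}" using \<rho> by (simp add: bij_betw_def)
  have "{j. j < N \<and> vmul N x (mm \<rho> d) j \<noteq> vmul N y (mm \<rho> d) j} = \<rho> ` {i. i < N \<and> x i \<noteq> y i}"
  proof (intro equalityI subsetI)
    fix j assume "j \<in> {j. j < N \<and> vmul N x (mm \<rho> d) j \<noteq> vmul N y (mm \<rho> d) j}"
    then have j: "j < N" "vmul N x (mm \<rho> d) j \<noteq> vmul N y (mm \<rho> d) j" by auto
    obtain i where i: "i < N" "j = \<rho> i" using bij_cover[OF \<rho> j(1)] by blast
    then have "x i * d i \<noteq> y i * d i" using j vmul_mm[OF \<rho>] by metis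
    then have "x i \<noteq> y i" by auto
    then show "j \<in> \<rho> ` {i. i < N \<and> x i \<noteq> y i}" using i by blast
  next
    fix j assume "j \<in> \<rho> ` {i. i < N \<and> x i \<noteq> y i}"
    then obtain i where i: "i < N" "x i \<noteq> y i" "j = \<rho> i" by blast
    have "\<rho> i < N" using \<rho> i by (auto dest: bij_betw_apply)
    moreover have "x i * d i \<noteq> y i * d i" using i d by simp
    ultimately show "j \<in> {j. j < N \<and> vmul N x (mm \<rho> d) j \<noteq> vmul N y (mm \<rho> d) j}"
      using i vmul_mm[OF \<rho> i(1)] by simp
  qed
  moreover have "inj_on \<rho> {i. i < N \<and> x i \<noteq> y i}" using inj by (rule inj_on_subset) auto
  ultimately show ?thesis by (simp add: hdist_def card_image)
qed

definition Psi :: "(nat \<Rightarrow> nat) \<Rightarrow> (nat \<Rightarrow> 'a) \<Rightarrow> (nat \<Rightarrow> 'a) \<Rightarrow> nat \<Rightarrow> 'a" where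
  "Psi \<rho> d y = (\<lambda>j. if j < N then y (\<rho> j) / d j else 0)"

lemma Psi_vecs: "Psi \<rho> d y \<in> vecs N" by (simp add: Psi_def vecs_def)

lemma vmul_Psi:
  assumes \<rho>: "bij_betw \<rho> {..<N} {..<N}" and d: "\<forall>i<N. d i \<noteq> 0" and y: "y \<in> vecs N"
  shows "vmul N (Psi \<rho> d y) (mm \<rho> d) = y"
proof (rule ext)
  fix j show "vmul N (Psi \<rho> d y) (mm \<rho> d) j = y j"
  proof (cases "j < N")
    case True
    then obtain i where i: "i < N" "j = \<rho> i" using bij_cover[OF \<rho>] by blast
    then show ?thesis using vmul_mm[OF \<rho> i(1)] d by (simp add: Psi_def)
  next
    case False then show ?thesis using y by (simp add: vmul_def vecs_def)
  qed
qed

lemma Psi_vmul: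
  assumes \<rho>: "bij_betw \<rho> {..<N} {..<N}" and d: "\<forall>i<N. d i \<noteq> 0" and x: "x \<in> vecs N"
  shows "Psi \<rho> d (vmul N x (mm \<rho> d)) = x"
proof (rule ext)
  fix j show "Psi \<rho> d (vmul N x (mm \<rho> d)) j = x j"
  proof (cases "j < N")
    case True then show ?thesis using vmul_mm[OF \<rho> True] d by (simp add: Psi_def)
  next
    case False then show ?thesis using x by (simp add: Psi_def vecs_def)
  qed
qed

end

context kr
begin

definition Tm :: "(nat \<Rightarrow> nat \<Rightarrow> 'a) \<Rightarrow> (nat \<Rightarrow> 'a) \<Rightarrow> nat \<Rightarrow> 'a" where
  "Tm t v = (\<lambda>i. if i < mb then (\<Sum>l<mb. t i l * v l) else 0)"

definition rho :: "(nat \<Rightarrow> nat) \<Rightarrow> (nat \<Rightarrow> nat) \<Rightarrow> nat \<Rightarrow> nat" where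
  "rho \<sigma> \<pi> j = \<sigma> (j div nb) * nb + \<pi> (j mod nb)"

definition dd :: "'a \<Rightarrow> (nat \<Rightarrow> 'a) \<Rightarrow> nat \<Rightarrow> 'a" where
  "dd \<gamma> c j = \<gamma> * c (j mod nb)"

definition goodT :: "(nat \<Rightarrow> nat \<Rightarrow> 'a) \<Rightarrow> (nat \<Rightarrow> nat) \<Rightarrow> (nat \<Rightarrow> 'a) \<Rightarrow> bool" where
  "goodT t \<pi> c \<longleftrightarrow> (\<forall>v\<in>vecs mb. Tm t v = 0 \<longrightarrow> v = 0) \<and> bij_betw \<pi> {..<nb} {..<nb} \<and>
     (\<forall>k<nb. c k \<noteq> 0 \<and> Tm t (col k) = vscale (c k) (col (\<pi> k)))"

lemma lt_mult_add: "a < na \<Longrightarrow> b < nb \<Longrightarrow> a * nb + b < na * nb"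
proof -
  assume "a < na" "b < nb"
  then have "a * nb + b < (a + 1) * nb" by simp
  also have "\<dots> \<le> na * nb" using \<open>a < na\<close> by (intro mult_le_mono1) simp
  finally show ?thesis .
qed

lemma rho_bij:
  assumes \<sigma>: "bij_betw \<sigma> {..<na} {..<na}" and \<pi>: "bij_betw \<pi> {..<nb} {..<nb}"
  shows "bij_betw (rho \<sigma> \<pi>) {..<N} {..<N}"
proof -
  have sub: "rho \<sigma> \<pi> ` {..<N} \<subseteq> {..<N}"
  proof
    fix y assume "y \<in> rho \<sigma> \<pi> ` {..<N}"
    then obtain j where j: "j < N" "y = rho \<sigma> \<pi> j" by auto
    have "j div nb < na" using j nb_pos by (simp add: N_def less_mult_imp_div_less)
    then have "\<sigma> (j div nb) < na" using \<sigma> by (auto dest: bij_betw_apply)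
    moreover have "\<pi> (j mod nb) < nb" using bij_betw_apply[OF \<pi>, of "j mod nb"] nb_pos by simp
    ultimately show "y \<in> {..<N}" using j lt_mult_add by (simp add: rho_def N_def)
  qed
  have inj: "inj_on (rho \<sigma> \<pi>) {..<N}"
  proof (rule inj_onI)
    fix j j' assume jj: "j \<in> {..<N}" "j' \<in> {..<N}" "rho \<sigma> \<pi> j = rho \<sigma> \<pi> j'"
    have p1: "\<pi> (j mod nb) < nb" "\<pi> (j' mod nb) < nb"
      using bij_betw_apply[OF \<pi>, of "j mod nb"] bij_betw_apply[OF \<pi>, of "j' mod nb"] nb_pos by simp_all
    have "rho \<sigma> \<pi> j div nb = \<sigma> (j div nb)" "rho \<sigma> \<pi> j' div nb = \<sigma> (j' div nb)"
      using p1 by (simp_all add: rho_def)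
    then have e1: "\<sigma> (j div nb) = \<sigma> (j' div nb)" using jj by simp
    have "rho \<sigma> \<pi> j mod nb = \<pi> (j mod nb)" "rho \<sigma> \<pi> j' mod nb = \<pi> (j' mod nb)"
      using p1 by (simp_all add: rho_def)
    then have e2: "\<pi> (j mod nb) = \<pi> (j' mod nb)" using jj by simp
    have "j div nb < na" "j' div nb < na" using jj nb_pos by (simp_all add: N_def less_mult_imp_div_less)
    then have "j div nb = j' div nb" using e1 \<sigma> by (auto simp: bij_betw_def dest: inj_onD)
    moreover have "j mod nb = j' mod nb" using e2 \<pi> nb_pos by (auto simp: bij_betw_def dest: inj_onD)
    ultimately show "j = j'" by (metis div_mod_decomp)
  qed
  have "rho \<sigma> \<pi> ` {..<N} = {..<N}" using endo_inj_surj[OF _ sub inj] by simp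
  then show ?thesis using inj by (simp add: bij_betw_def)
qed

lemma rho_mod: "bij_betw \<pi> {..<nb} {..<nb} \<Longrightarrow> rho \<sigma> \<pi> j mod nb = \<pi> (j mod nb)"
proof -
  assume \<pi>: "bij_betw \<pi> {..<nb} {..<nb}"
  have "\<pi> (j mod nb) < nb" using bij_betw_apply[OF \<pi>, of "j mod nb"] nb_pos by simp
  then show ?thesis by (simp add: rho_def)
qed

lemma Tm_col: "i < mb \<Longrightarrow> Tm t (col k) i = (\<Sum>l<mb. t i l * B l k)"
  by (simp add: Tm_def col_def)

lemma syn_Phi:
  assumes \<sigma>: "bij_betw \<sigma> {..<na} {..<na}" and g: "goodT t \<pi> c"
  shows "syn (vmul N x (mm (rho \<sigma> \<pi>) (dd \<gamma> c))) = vscale \<gamma> (Tm t (syn x))"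
proof (rule ext)
  fix i
  have \<pi>: "bij_betw \<pi> {..<nb} {..<nb}" using g by (simp add: goodT_def)
  have \<rho>: "bij_betw (rho \<sigma> \<pi>) {..<N} {..<N}" using rho_bij[OF \<sigma> \<pi>] .
  show "syn (vmul N x (mm (rho \<sigma> \<pi>) (dd \<gamma> c))) i = vscale \<gamma> (Tm t (syn x)) i"
  proof (cases "i < mb")
    case False then show ?thesis by (simp add: syn_def Tm_def vscale_def)
  next
    case True
    have "syn (vmul N x (mm (rho \<sigma> \<pi>) (dd \<gamma> c))) i
        = (\<Sum>j<N. B i (j mod nb) * vmul N x (mm (rho \<sigma> \<pi>) (dd \<gamma> c)) j)"
      using True by (simp add: syn_def)
    also have "\<dots> = (\<Sum>j0<N. B i (rho \<sigma> \<pi> j0 mod nb) * vmul N x (mm (rho \<sigma> \<pi>) (dd \<gamma> c)) (rho \<sigma> \<pi> j0))"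
      using sum.reindex_bij_betw[OF \<rho>, of "\<lambda>j. B i (j mod nb) * vmul N x (mm (rho \<sigma> \<pi>) (dd \<gamma> c)) j"]
      by simp
    also have "\<dots> = (\<Sum>j<N. \<gamma> * (x j * (c (j mod nb) * B i (\<pi> (j mod nb)))))"
      using vmul_mm[OF \<rho>] rho_mod[OF \<pi>] by (intro sum.cong refl) (simp add: dd_def algebra_simps)
    also have "\<dots> = (\<Sum>j<N. \<gamma> * (x j * (\<Sum>l<mb. t i l * B l (j mod nb))))"
    proof (intro sum.cong refl)
      fix j :: nat
      have "j mod nb < nb" using nb_pos by simp
      then have "Tm t (col (j mod nb)) i = vscale (c (j mod nb)) (col (\<pi> (j mod nb))) i"
        using g by (simp add: goodT_def)
      moreover have "Tm t (col (j mod nb)) i = (\<Sum>l<mb. t i l * B l (j mod nb))" by (rule Tm_col[OF True])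
      ultimately have "(\<Sum>l<mb. t i l * B l (j mod nb)) = c (j mod nb) * B i (\<pi> (j mod nb))"
        using True by (simp add: vscale_def col_def)
      then show "\<gamma> * (x j * (c (j mod nb) * B i (\<pi> (j mod nb)))) = \<gamma> * (x j * (\<Sum>l<mb. t i l * B l (j mod nb)))"
        by simp
    qed
    also have "\<dots> = \<gamma> * (\<Sum>l<mb. t i l * (\<Sum>j<N. B l (j mod nb) * x j))"
      by (simp add: sum_distrib_left sum_distrib_right algebra_simps sum.swap[of _ "{..<N}"])
    also have "\<dots> = vscale \<gamma> (Tm t (syn x)) i"
      using True by (simp add: vscale_def Tm_def syn_def)
    finally show ?thesis .
  qed
qed

end

context kr
begin

lemma dd_nz: "goodT t \<pi> c \<Longrightarrow> \<gamma> \<noteq> 0 \<Longrightarrow> \<forall>i<N. dd \<gamma> c i \<noteq> 0"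
  using nb_pos by (simp add: goodT_def dd_def)

lemma Phi_CC:
  assumes \<sigma>: "bij_betw \<sigma> {..<na} {..<na}" and g: "goodT t \<pi> c" and \<gamma>: "\<gamma> \<noteq> 0"
    and x: "x \<in> vecs N"
  shows "vmul N x (mm (rho \<sigma> \<pi>) (dd \<gamma> c)) \<in> CC \<longleftrightarrow> x \<in> CC"
proof -
  have e: "syn (vmul N x (mm (rho \<sigma> \<pi>) (dd \<gamma> c))) = vscale \<gamma> (Tm t (syn x))"
    by (rule syn_Phi[OF \<sigma> g])
  have "vscale \<gamma> (Tm t (syn x)) = 0 \<longleftrightarrow> syn x = 0"
  proof
    assume "vscale \<gamma> (Tm t (syn x)) = 0"
    then have "Tm t (syn x) = 0" using \<gamma> by (simp add: vscale_def fun_eq_iff)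
    then show "syn x = 0" using g syn_vecs by (simp add: goodT_def)
  next
    assume "syn x = 0"
    then show "vscale \<gamma> (Tm t (syn x)) = 0" by (simp add: vscale_def Tm_def fun_eq_iff)
  qed
  moreover have "vmul N x (mm (rho \<sigma> \<pi>) (dd \<gamma> c)) \<in> vecs N" by (simp add: vmul_def vecs_def)
  ultimately show ?thesis using e x by (simp add: CC_def)
qed

lemma mm_Aut:
  assumes \<sigma>: "bij_betw \<sigma> {..<na} {..<na}" and g: "goodT t \<pi> c" and \<gamma>: "\<gamma> \<noteq> 0"
  shows "mm (rho \<sigma> \<pi>) (dd \<gamma> c) \<in> Aut N CC"
proof -
  have \<pi>: "bij_betw \<pi> {..<nb} {..<nb}" using g by (simp add: goodT_def)
  have \<rho>: "bij_betw (rho \<sigma> \<pi>) {..<N} {..<N}" using rho_bij[OF \<sigma> \<pi>] .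
  have d: "\<forall>i<N. dd \<gamma> c i \<noteq> 0" using dd_nz[OF g \<gamma>] .
  have "(\<lambda>x. vmul N x (mm (rho \<sigma> \<pi>) (dd \<gamma> c))) ` CC = CC"
  proof (intro equalityI subsetI)
    fix y assume "y \<in> (\<lambda>x. vmul N x (mm (rho \<sigma> \<pi>) (dd \<gamma> c))) ` CC"
    then obtain x where "x \<in> CC" "y = vmul N x (mm (rho \<sigma> \<pi>) (dd \<gamma> c))" by blast
    then show "y \<in> CC" using Phi_CC[OF \<sigma> g \<gamma>] CC_vecs by auto
  next
    fix y assume y: "y \<in> CC"
    then have yv: "y \<in> vecs N" using CC_vecs by auto
    have e: "vmul N (Psi (rho \<sigma> \<pi>) (dd \<gamma> c) y) (mm (rho \<sigma> \<pi>) (dd \<gamma> c)) = y"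
      by (rule vmul_Psi[OF \<rho> d yv])
    then have "Psi (rho \<sigma> \<pi>) (dd \<gamma> c) y \<in> CC"
      using Phi_CC[OF \<sigma> g \<gamma> Psi_vecs[of "rho \<sigma> \<pi>" "dd \<gamma> c" y]] y by simp
    then show "y \<in> (\<lambda>x. vmul N x (mm (rho \<sigma> \<pi>) (dd \<gamma> c))) ` CC" using e by (metis image_eqI)
  qed
  then show ?thesis using mm_monomial[OF \<rho> d] by (simp add: Aut_def)
qed

lemma Tm_vecs: "Tm t v \<in> vecs mb" by (simp add: Tm_def vecs_def)

lemma Tm_diff_scale: "Tm t (u - vscale a w) = Tm t u - vscale a (Tm t w)"
  by (auto simp: Tm_def fun_eq_iff vscale_def algebra_simps sum_subtractf sum_distrib_left)

lemma goodT_exists: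
  assumes inj: "\<forall>v\<in>vecs mb. Tm t v = 0 \<longrightarrow> v = 0"
  shows "\<exists>\<pi> c. goodT t \<pi> c"
proof -
  have ex: "\<forall>k<nb. \<exists>k'<nb. \<exists>c. c \<noteq> 0 \<and> Tm t (col k) = vscale c (col k')"
  proof (intro allI impI)
    fix k assume k: "k < nb"
    have "Tm t (col k) \<noteq> 0" using inj col_vecs col_nz[OF k] by blast
    then show "\<exists>k'<nb. \<exists>c. c \<noteq> 0 \<and> Tm t (col k) = vscale c (col k')"
      using col_surj[OF Tm_vecs] by blast
  qed
  define \<pi> where "\<pi> k = (SOME k'. k' < nb \<and> (\<exists>c. c \<noteq> 0 \<and> Tm t (col k) = vscale c (col k')))" for k
  define c where "c k = (SOME c. c \<noteq> 0 \<and> Tm t (col k) = vscale c (col (\<pi> k)))" for k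
  have pc: "\<pi> k < nb \<and> c k \<noteq> 0 \<and> Tm t (col k) = vscale (c k) (col (\<pi> k))" if k: "k < nb" for k
  proof -
    have "\<pi> k < nb \<and> (\<exists>c. c \<noteq> 0 \<and> Tm t (col k) = vscale c (col (\<pi> k)))"
      unfolding \<pi>_def by (rule someI_ex) (use ex k in blast)
    moreover then obtain c0 where "c0 \<noteq> 0 \<and> Tm t (col k) = vscale c0 (col (\<pi> k))" by blast
    then have "c k \<noteq> 0 \<and> Tm t (col k) = vscale (c k) (col (\<pi> k))"
      unfolding c_def by (rule someI)
    ultimately show ?thesis by blast
  qed
  have sub: "\<pi> ` {..<nb} \<subseteq> {..<nb}" using pc by auto
  have pinj: "inj_on \<pi> {..<nb}"
  proof (rule inj_onI)
    fix k k' assume kk: "k \<in> {..<nb}" "k' \<in> {..<nb}" "\<pi> k = \<pi> k'"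
    show "k = k'"
    proof (rule ccontr)
      assume ne: "k \<noteq> k'"
      have k: "k < nb" "k' < nb" using kk by auto
      have "Tm t (col k - vscale (c k / c k') (col k')) = Tm t (col k) - vscale (c k / c k') (Tm t (col k'))"
        by (rule Tm_diff_scale)
      also have "\<dots> = 0" using pc[OF k(1)] pc[OF k(2)] kk(3)
        by (simp add: vscale_def fun_eq_iff)
      finally have "col k - vscale (c k / c k') (col k') = 0"
        using inj vecs_diff[OF col_vecs vecs_scale[OF col_vecs]] by blast
      then have "col k = vscale (c k / c k') (col k')" by simp
      then show False using col_indep k ne by blast
    qed
  qed
  have "\<pi> ` {..<nb} = {..<nb}" using endo_inj_surj[OF _ sub pinj] by simp
  then have "bij_betw \<pi> {..<nb} {..<nb}" using pinj by (simp add: bij_betw_def)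
  then have "goodT t \<pi> c" using inj pc by (simp add: goodT_def)
  then show ?thesis by blast
qed

lemma goodT_pi:
  assumes "goodT t \<pi> c" "j < nb" "j' < nb" "Tm t (col j) = col j'"
  shows "\<pi> j = j'"
proof (rule ccontr)
  assume ne: "\<pi> j \<noteq> j'"
  have "\<pi> j < nb" using assms(1,2) by (auto simp: goodT_def dest: bij_betw_apply)
  moreover have "col j' = vscale (c j) (col (\<pi> j))" using assms by (simp add: goodT_def)
  ultimately show False using col_indep assms(3) ne by metis
qed

end

context kr
begin

lemma T_id: "\<exists>t. (\<forall>v\<in>vecs mb. Tm t v = 0 \<longrightarrow> v = 0) \<and> Tm t (col j) = col j"
proof -
  define t :: "nat \<Rightarrow> nat \<Rightarrow> 'a" where "t i l = (if i = l then 1 else 0)" for i l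
  have e: "Tm t v = v" if "v \<in> vecs mb" for v
  proof (rule ext)
    fix i show "Tm t v i = v i"
    proof (cases "i < mb")
      case True
      have "(\<Sum>l<mb. t i l * v l) = (\<Sum>l<mb. if i = l then v l else 0)"
        by (rule sum.cong) (simp_all add: t_def)
      then show ?thesis using True by (simp add: Tm_def)
    next
      case False then show ?thesis using that by (simp add: Tm_def vecs_def)
    qed
  qed
  show ?thesis using e col_vecs by (intro exI[of _ t]) auto
qed

lemma T_trans:
  assumes j: "j < nb" "j' < nb" "j \<noteq> j'"
  shows "\<exists>t. (\<forall>v\<in>vecs mb. Tm t v = 0 \<longrightarrow> v = 0) \<and> Tm t (col j) = col j'"
proof -
  define u where "u = col j"
  define w where "w = col j' - col j"
  obtain r where r: "r < mb" "u r \<noteq> 0"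
  proof -
    have "u \<noteq> 0" using col_nz j by (simp add: u_def)
    then obtain r where "u r \<noteq> 0" by (auto simp: fun_eq_iff)
    moreover then have "r < mb" by (simp add: u_def col_def split: if_splits)
    ultimately show ?thesis using that by blast
  qed
  obtain s where s: "s < mb" "u r * w s - u s * w r \<noteq> 0"
  proof (rule ccontr)
    assume "\<not> thesis"
    then have all: "\<forall>s<mb. u r * w s = u s * w r" using that by auto
    have "w = vscale (w r / u r) u"
    proof (rule ext)
      fix s show "w s = vscale (w r / u r) u s"
      proof (cases "s < mb")
        case True then show ?thesis using all r by (simp add: vscale_def field_simps)
      next
        case False then show ?thesis by (simp add: w_def u_def col_def vscale_def)
      qed
    qed
    note weq = this
    have wi: "w i = (w r / u r) * u i" for i using fun_cong[OF weq, of i] by (simp add: vscale_def)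
    have "col j' = vscale (1 + w r / u r) (col j)"
    proof (rule ext)
      fix i
      have "col j' i = col j i + w i" by (simp add: w_def)
      then show "col j' i = vscale (1 + w r / u r) (col j) i"
        using wi[of i] by (simp add: u_def vscale_def algebra_simps)
    qed
    then show False using col_indep j by metis
  qed
  define D where "D = u r * w s - u s * w r"
  have D: "D \<noteq> 0" using s by (simp add: D_def)
  have rs: "r \<noteq> s" using s by auto
  define \<alpha> where "\<alpha> = w s / D"
  define \<beta> where "\<beta> = - w r / D"
  define f where "f v = \<alpha> * v r + \<beta> * v s" for v :: "nat \<Rightarrow> 'a"
  define t :: "nat \<Rightarrow> nat \<Rightarrow> 'a" where
    "t i l = (if i = l then 1 else 0) + w i * ((if l = r then \<alpha> else 0) + (if l = s then \<beta> else 0))" for i l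
  have "f u = (u r * w s - u s * w r) / D"
    by (simp add: f_def \<alpha>_def \<beta>_def diff_divide_distrib algebra_simps)
  then have fu: "f u = 1" using D by (simp add: D_def)
  have fw: "f w = 0" using D by (simp add: f_def \<alpha>_def \<beta>_def field_simps)
  have Tt: "Tm t v i = v i + w i * f v" if "i < mb" for v i
  proof -
    have "(\<Sum>l<mb. t i l * v l) = (\<Sum>l<mb. (if i = l then v l else 0)
        + w i * ((if l = r then \<alpha> * v l else 0) + (if l = s then \<beta> * v l else 0)))"
      by (rule sum.cong) (auto simp: t_def algebra_simps)
    also have "\<dots> = (\<Sum>l<mb. (if i = l then v l else 0))
        + w i * ((\<Sum>l<mb. (if l = r then \<alpha> * v l else 0)) + (\<Sum>l<mb. (if l = s then \<beta> * v l else 0)))"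
      by (simp only: sum.distrib sum_distrib_left[symmetric])
    also have "\<dots> = v i + w i * f v" using that r s by (simp add: f_def)
    finally show ?thesis using that by (simp add: Tm_def)
  qed
  have "Tm t (col j) = col j'"
  proof (rule ext)
    fix i show "Tm t (col j) i = col j' i"
    proof (cases "i < mb")
      case True then show ?thesis using Tt[OF True, of u] fu by (simp add: u_def w_def)
    next
      case False then show ?thesis by (simp add: Tm_def col_def)
    qed
  qed
  moreover have "\<forall>v\<in>vecs mb. Tm t v = 0 \<longrightarrow> v = 0"
  proof (intro ballI impI)
    fix v assume v: "v \<in> vecs mb" "Tm t v = 0"
    have vi: "v i = - (w i * f v)" if "i < mb" for i
      proof -
      have "v i + w i * f v = 0" using Tt[OF that, of v] v(2) by simp
      then show ?thesis by (simp add: eq_neg_iff_add_eq_0)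
    qed
    have "f v = \<alpha> * v r + \<beta> * v s" by (simp only: f_def)
    also have "\<dots> = \<alpha> * (- (w r * f v)) + \<beta> * (- (w s * f v))" by (simp only: vi[OF r(1)] vi[OF s(1)])
    also have "\<dots> = - (f v * f w)" by (simp add: f_def algebra_simps)
    finally have "f v = 0" using fw by simp
    show "v = 0"
    proof (rule ext)
      fix i show "v i = 0 i"
        using vi \<open>f v = 0\<close> v(1) by (cases "i < mb") (simp_all add: vecs_def)
    qed
  qed
  ultimately show ?thesis by blast
qed

lemma T_exists: "j < nb \<Longrightarrow> j' < nb \<Longrightarrow> \<exists>t. (\<forall>v\<in>vecs mb. Tm t v = 0 \<longrightarrow> v = 0) \<and> Tm t (col j) = col j'"
  using T_id T_trans by (cases "j = j'") auto

end

context kr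
begin

lemma swap_bij:
  assumes "a < na" "b < na"
  shows "bij_betw (\<lambda>x. if x = a then b else if x = b then a else x) {..<na} {..<na}"
  by (rule bij_betw_byWitness[where f' = "\<lambda>x. if x = a then b else if x = b then a else x"]) (use assms in auto)

lemma strong_trans:
  assumes p: "p < N" "p' < N" and ab: "\<alpha> \<noteq> 0" "\<beta> \<noteq> 0"
  shows "\<exists>M. M \<in> Aut N CC \<and> vmul N (vscale \<alpha> (uv p)) M = vscale \<beta> (uv p') \<and>
           (\<forall>x y. hdist N (vmul N x M) (vmul N y M) = hdist N x y)"
proof -
  define a where "a = p div nb"
  define b where "b = p' div nb"
  have ab_lt: "a < na" "b < na" using p nb_pos by (simp_all add: a_def b_def N_def less_mult_imp_div_less)
  define \<sigma> where "\<sigma> = (\<lambda>x. if x = a then b else if x = b then a else x)"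
  have \<sigma>: "bij_betw \<sigma> {..<na} {..<na}" unfolding \<sigma>_def by (rule swap_bij[OF ab_lt])
  have jj: "p mod nb < nb" "p' mod nb < nb" using nb_pos by simp_all
  obtain t where t: "\<forall>v\<in>vecs mb. Tm t v = 0 \<longrightarrow> v = 0" "Tm t (col (p mod nb)) = col (p' mod nb)"
    using T_exists[OF jj] by blast
  obtain \<pi> c where g: "goodT t \<pi> c" using goodT_exists[OF t(1)] by blast
  have \<pi>p: "\<pi> (p mod nb) = p' mod nb" by (rule goodT_pi[OF g jj t(2)])
  have \<pi>: "bij_betw \<pi> {..<nb} {..<nb}" using g by (simp add: goodT_def)
  have cnz: "c (p mod nb) \<noteq> 0" using g jj by (simp add: goodT_def)
  define \<gamma> where "\<gamma> = \<beta> / (\<alpha> * c (p mod nb))"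
  have \<gamma>: "\<gamma> \<noteq> 0" using ab cnz by (simp add: \<gamma>_def)
  define M where "M = mm (rho \<sigma> \<pi>) (dd \<gamma> c)"
  have \<rho>: "bij_betw (rho \<sigma> \<pi>) {..<N} {..<N}" by (rule rho_bij[OF \<sigma> \<pi>])
  have d: "\<forall>i<N. dd \<gamma> c i \<noteq> 0" by (rule dd_nz[OF g \<gamma>])
  have \<rho>p: "rho \<sigma> \<pi> p = p'"
  proof -
    have "\<sigma> a = b" by (simp add: \<sigma>_def)
    then have "rho \<sigma> \<pi> p = (p' div nb) * nb + p' mod nb" using \<pi>p by (simp add: rho_def a_def b_def)
    then show ?thesis by simp
  qed
  have inj: "inj_on (rho \<sigma> \<pi>) {..<N}" using \<rho> by (simp add: bij_betw_def)
  have "vmul N (vscale \<alpha> (uv p)) M = vscale \<beta> (uv p')"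
  proof (rule ext)
    fix j show "vmul N (vscale \<alpha> (uv p)) M j = vscale \<beta> (uv p') j"
    proof (cases "j < N")
      case True
      then obtain i where i: "i < N" "j = rho \<sigma> \<pi> i" using bij_cover[OF \<rho>] by blast
      have e: "vmul N (vscale \<alpha> (uv p)) M j = vscale \<alpha> (uv p) i * dd \<gamma> c i"
        using vmul_mm[OF \<rho> i(1)] i by (simp add: M_def)
      show ?thesis
      proof (cases "i = p")
        case True
        then show ?thesis using e i \<rho>p ab cnz by (simp add: vscale_def uv_def dd_def \<gamma>_def)
      next
        case False
        then have "j \<noteq> p'" using i \<rho>p inj p by (auto dest: inj_onD)
        then show ?thesis using e False by (simp add: vscale_def uv_def)
      qed
    next
      case False then show ?thesis using p by (simp add: vmul_def vscale_def uv_def)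
    qed
  qed
  moreover have "M \<in> Aut N CC" unfolding M_def by (rule mm_Aut[OF \<sigma> g \<gamma>])
  moreover have "\<forall>x y. hdist N (vmul N x M) (vmul N y M) = hdist N x y"
    unfolding M_def using mm_hdist[OF \<rho> d] by blast
  ultimately show ?thesis by blast
qed

lemma weight1:
  fixes u :: "nat \<Rightarrow> 'a"
  assumes u: "u \<in> vecs N" "hweight N u = 1"
  shows "\<exists>p<N. u p \<noteq> 0 \<and> u = vscale (u p) (uv p)"
proof -
  have "card {i. i < N \<and> u i \<noteq> 0} = 1" using u by (simp add: hweight_def)
  then obtain p where p: "{i. i < N \<and> u i \<noteq> 0} = {p}" by (rule card_1_singletonE)
  then have pp: "p < N" "u p \<noteq> 0" by auto
  have "u = vscale (u p) (uv p)"
  proof (rule ext)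
    fix j show "u j = vscale (u p) (uv p) j"
    proof (cases "j = p")
      case True then show ?thesis by (simp add: vscale_def uv_def)
    next
      case False
      then have "u j = 0" using p u(1) by (cases "j < N") (auto simp: vecs_def)
      then show ?thesis using False by (simp add: vscale_def uv_def)
    qed
  qed
  then show ?thesis using pp by blast
qed

lemma aut_trans: "aut_transitive N CC"
  unfolding aut_transitive_def
proof (intro ballI impI)
  fix u v :: "nat \<Rightarrow> 'a" assume uv: "u \<in> vecs N" "v \<in> vecs N" "hweight N u = 1 \<and> hweight N v = 1"
  obtain p where p: "p < N" "u p \<noteq> 0" "u = vscale (u p) (uv p)" using weight1 uv by blast
  obtain p' where p': "p' < N" "v p' \<noteq> 0" "v = vscale (v p') (uv p')" using weight1 uv by blast
  obtain M where "M \<in> Aut N CC" "vmul N (vscale (u p) (uv p)) M = vscale (v p') (uv p')"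
    using strong_trans[OF p(1) p'(1) p(2) p'(2)] by blast
  then show "\<exists>M\<in>Aut N CC. vmul N u M = v" using p(3) p'(3) by metis
qed

end

context kr
begin

lemma Aut_CC: "M \<in> Aut N CC \<Longrightarrow> x \<in> CC \<Longrightarrow> vmul N x M \<in> CC"
  by (auto simp: Aut_def)

lemma vmul_diff: "vmul n (x - y) M = vmul n x M - vmul n y M"
  for x y :: "nat \<Rightarrow> 'a"
  by (auto simp: vmul_def fun_eq_iff algebra_simps sum_subtractf)

lemma vmul_add: "vmul n (x + y) M = vmul n x M + vmul n y M"
  for x y :: "nat \<Rightarrow> 'a"
  by (auto simp: vmul_def fun_eq_iff algebra_simps sum.distrib)

lemma monomial_kernel:
  fixes x :: "nat \<Rightarrow> 'a"
  assumes M: "monomial n M" and x: "x \<in> vecs n" and z: "vmul n x M = 0"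
  shows "x = 0"
proof (rule ext)
  fix i show "x i = 0 i"
  proof (cases "i < n")
    case False then show ?thesis using x by (simp add: vecs_def)
  next
    case True
    obtain j where j: "j < n" "M i j \<noteq> 0" using M True unfolding monomial_def by blast
    have "\<exists>!i'. i' < n \<and> M i' j \<noteq> 0" using M j(1) unfolding monomial_def by simp
    then obtain i0 where i0: "\<And>y. y < n \<and> M y j \<noteq> 0 \<Longrightarrow> y = i0" by (metis ex1E)
    have ii0: "i = i0" using i0 True j(2) by blast
    have "(\<Sum>i'<n. x i' * M i' j) = (\<Sum>i'<n. if i' = i then x i * M i j else 0)"
    proof (rule sum.cong[OF refl])
      fix i' assume "i' \<in> {..<n}"
      show "x i' * M i' j = (if i' = i then x i * M i j else 0)"
      proof (cases "i' = i")
        case False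
        have "M i' j = 0"
        proof (rule ccontr)
          assume "M i' j \<noteq> 0"
          then have "i' = i0" using i0 \<open>i' \<in> {..<n}\<close> by simp
          then show False using False ii0 by simp
        qed
        then show ?thesis using False by simp
      qed simp
    qed
    also have "\<dots> = x i * M i j" using True by simp
    finally have sumeq: "(\<Sum>i'<n. x i' * M i' j) = x i * M i j" .
    have "vmul n x M j = 0" using z by simp
    then have "(\<Sum>i'<n. x i' * M i' j) = 0" using j(1) by (simp add: vmul_def)
    then have "x i * M i j = 0" using sumeq by simp
    then show ?thesis using j by simp
  qed
qed

lemma Aut_out:
  assumes M: "M \<in> Aut N CC" and v: "v \<in> vecs N" "v \<notin> CC"
  shows "vmul N v M \<notin> CC"
proof
  assume "vmul N v M \<in> CC"
  then obtain c where c: "c \<in> CC" "vmul N v M = vmul N c M" using M by (auto simp: Aut_def)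
  then have "vmul N (v - c) M = 0" by (simp add: vmul_diff)
  moreover have "v - c \<in> vecs N" using v c CC_vecs vecs_diff by blast
  moreover have "monomial N M" using M by (simp add: Aut_def)
  ultimately have "v - c = 0" using monomial_kernel by blast
  then show False using c v by simp
qed

lemma coset_in: "y \<in> CC \<Longrightarrow> coset CC y = CC"
proof (intro equalityI subsetI)
  fix z assume "y \<in> CC" "z \<in> coset CC y"
  then show "z \<in> CC" by (auto simp: coset_def intro: CC_add)
next
  fix z assume "y \<in> CC" "z \<in> CC"
  then have "z - y \<in> CC" by (rule CC_diff[rotated])
  moreover have "z = y + (z - y)" by simp
  ultimately show "z \<in> coset CC y" unfolding coset_def by blast
qed

lemma coset_eq_CC: "coset CC y = CC \<Longrightarrow> y \<in> CC"
proof -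
  assume "coset CC y = CC"
  moreover have "y + 0 \<in> coset CC y" unfolding coset_def using CC_zero by blast
  ultimately show "y \<in> CC" by simp
qed

lemma coset_shift: "y - z \<in> CC \<Longrightarrow> coset CC y = coset CC z"
proof -
  assume d: "y - z \<in> CC"
  have a: "coset CC y \<subseteq> coset CC z" if "y - z \<in> CC" for y z
  proof
    fix u assume "u \<in> coset CC y"
    then obtain c where c: "c \<in> CC" "u = y + c" by (auto simp: coset_def)
    have "(y - z) + c \<in> CC" using that c(1) by (rule CC_add)
    moreover have "u = z + ((y - z) + c)" using c by simp
    ultimately show "u \<in> coset CC z" unfolding coset_def by blast
  qed
  have "z - y \<in> CC"
  proof -
    have "0 - (y - z) \<in> CC" using CC_zero d by (rule CC_diff)
    then show ?thesis by simp
  qed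
  then show ?thesis using a d by blast
qed

definition Orb :: "(nat \<Rightarrow> 'a) set set" where
  "Orb = {coset CC w | w. w \<in> vecs N \<and> w \<notin> CC}"

lemma Aut_nonempty: "\<exists>M. M \<in> Aut N CC"
  using strong_trans[of 0 0 1 1] N_pos by auto

lemma orbit_in: "v \<in> CC \<Longrightarrow> coset_orbit N CC v = {CC}"
proof -
  assume v: "v \<in> CC"
  obtain M0 where M0: "M0 \<in> Aut N CC" using Aut_nonempty by blast
  have "\<And>M. M \<in> Aut N CC \<Longrightarrow> coset CC (vmul N v M) = CC" using v Aut_CC coset_in by blast
  then show ?thesis using M0 unfolding coset_orbit_def by auto
qed

lemma orbit_out:
  assumes v: "v \<in> vecs N" "v \<notin> CC"
  shows "coset_orbit N CC v = Orb"
proof (intro equalityI subsetI)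
  fix X assume "X \<in> coset_orbit N CC v"
  then obtain M where M: "M \<in> Aut N CC" "X = coset CC (vmul N v M)" by (auto simp: coset_orbit_def)
  have "vmul N v M \<in> vecs N" by (simp add: vmul_def vecs_def)
  then show "X \<in> Orb" using Aut_out[OF M(1) v] M(2) by (auto simp: Orb_def)
next
  fix X assume "X \<in> Orb"
  then obtain w where w: "w \<in> vecs N" "w \<notin> CC" "X = coset CC w" by (auto simp: Orb_def)
  obtain p a where pa: "p < N" "a \<noteq> 0" "v - vscale a (uv p) \<in> CC" using not_CC_decomp v by blast
  obtain p' b where pb: "p' < N" "b \<noteq> 0" "w - vscale b (uv p') \<in> CC" using not_CC_decomp w by blast
  obtain M where M: "M \<in> Aut N CC" "vmul N (vscale a (uv p)) M = vscale b (uv p')"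
    using strong_trans[OF pa(1) pb(1) pa(2) pb(2)] by blast
  have "vmul N v M = vmul N (vscale a (uv p)) M + vmul N (v - vscale a (uv p)) M"
    by (simp add: vmul_add[symmetric])
  then have e: "vmul N v M = vscale b (uv p') + vmul N (v - vscale a (uv p)) M" using M by simp
  have "vmul N (v - vscale a (uv p)) M \<in> CC" using Aut_CC[OF M(1) pa(3)] .
  then have "vmul N v M - w \<in> CC"
  proof -
    assume h: "vmul N (v - vscale a (uv p)) M \<in> CC"
    have eq: "vmul N v M - w = vmul N (v - vscale a (uv p)) M - (w - vscale b (uv p'))"
      using e by (simp add: algebra_simps)
    show ?thesis unfolding eq by (rule CC_diff[OF h pb(3)])
  qed
  then have "coset CC (vmul N v M) = X" using coset_shift w(3) by simp
  then show "X \<in> coset_orbit N CC v" using M(1) unfolding coset_orbit_def by blast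
qed

lemma comp_trans: "completely_transitive N CC"
proof -
  have u0: "(uv 0 :: nat \<Rightarrow> 'a) \<in> vecs N" "(uv 0 :: nat \<Rightarrow> 'a) \<notin> CC"
    using single_vecs[of 0 N 1] single_notin[of 0 1] N_pos uv_scale1 by auto
  have img: "coset_orbit N CC ` vecs N = {{CC}, Orb}"
  proof (intro equalityI subsetI)
    fix X assume "X \<in> coset_orbit N CC ` vecs N"
    then obtain v where v: "v \<in> vecs N" "X = coset_orbit N CC v" by blast
    then show "X \<in> {{CC}, Orb}" using orbit_in orbit_out by (cases "v \<in> CC") auto
  next
    fix X assume "X \<in> {{CC}, Orb}"
    then consider "X = {CC}" | "X = Orb" by blast
    then show "X \<in> coset_orbit N CC ` vecs N"
    proof cases
      case 1
      have "(0::nat \<Rightarrow> 'a) \<in> vecs N" by (simp add: vecs_def)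
      then show ?thesis using 1 orbit_in[OF CC_zero] by (metis image_eqI)
    next
      case 2 then show ?thesis using orbit_out[OF u0] u0(1) by (metis image_eqI)
    qed
  qed
  have "coset CC (uv 0) \<in> Orb" using u0 by (auto simp: Orb_def)
  moreover have "coset CC (uv 0) \<noteq> CC" using u0 coset_eq_CC by blast
  ultimately have "{CC} \<noteq> Orb" by auto
  then have "card (coset_orbit N CC ` vecs N) = 2" using img by simp
  then show ?thesis using cov_rad by (simp add: completely_transitive_def)
qed

lemma card_translate:
  assumes w: "w \<in> CC"
  shows "card {c \<in> CC. hdist N x c = i} = card {c \<in> CC. hdist N (x - w) c = i}"
proof (rule bij_betw_same_card)
  show "bij_betw (\<lambda>c. c - w) {c \<in> CC. hdist N x c = i} {c \<in> CC. hdist N (x - w) c = i}"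
  proof (rule bij_betw_byWitness[where f' = "\<lambda>c. c + w"])
    have hd: "hdist N (x - w) (c - w) = hdist N x c" for c by (simp add: hdist_def)
    show "\<forall>a\<in>{c \<in> CC. hdist N x c = i}. a - w + w = a" by simp
    show "\<forall>a\<in>{c \<in> CC. hdist N (x - w) c = i}. a + w - w = a" by simp
    show "(\<lambda>c. c - w) ` {c \<in> CC. hdist N x c = i} \<subseteq> {c \<in> CC. hdist N (x - w) c = i}"
      using w hd CC_diff by auto
    show "(\<lambda>c. c + w) ` {c \<in> CC. hdist N (x - w) c = i} \<subseteq> {c \<in> CC. hdist N x c = i}"
    proof
      fix y assume "y \<in> (\<lambda>c. c + w) ` {c \<in> CC. hdist N (x - w) c = i}"
      then obtain c where c: "c \<in> CC" "hdist N (x - w) c = i" "y = c + w" by blast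
      have "hdist N x y = hdist N (x - w) (y - w)" using hd by simp
      then show "y \<in> {c \<in> CC. hdist N x c = i}" using c w CC_add by auto
    qed
  qed
qed

lemma card_aut:
  assumes M: "M \<in> Aut N CC" and hd: "\<forall>x y. hdist N (vmul N x M) (vmul N y M) = hdist N x y"
  shows "card {c \<in> CC. hdist N u c = i} = card {c \<in> CC. hdist N (vmul N u M) c = i}"
proof (rule bij_betw_same_card)
  let ?f = "\<lambda>x. vmul N x M"
  have img: "?f ` CC = CC" using M by (simp add: Aut_def)
  have inj: "inj_on ?f CC"
  proof (rule inj_onI)
    fix x y assume "x \<in> CC" "y \<in> CC" "?f x = ?f y"
    then have "hdist N x y = 0" using hd[rule_format, of x y] hdist_self[of N "?f x"] by simp
    then show "x = y" using hdist_zero \<open>x \<in> CC\<close> \<open>y \<in> CC\<close> CC_vecs by blast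
  qed
  show "bij_betw ?f {c \<in> CC. hdist N u c = i} {c \<in> CC. hdist N (vmul N u M) c = i}"
    unfolding bij_betw_def
  proof
    show "inj_on ?f {c \<in> CC. hdist N u c = i}" using inj by (rule inj_on_subset) auto
    show "?f ` {c \<in> CC. hdist N u c = i} = {c \<in> CC. hdist N (vmul N u M) c = i}"
    proof (intro equalityI subsetI)
      fix y assume "y \<in> ?f ` {c \<in> CC. hdist N u c = i}"
      then obtain c where "c \<in> CC" "hdist N u c = i" "y = ?f c" by blast
      then show "y \<in> {c \<in> CC. hdist N (vmul N u M) c = i}" using img hd by auto
    next
      fix y assume y: "y \<in> {c \<in> CC. hdist N (vmul N u M) c = i}"
      then have "y \<in> ?f ` CC" using img by simp
      then obtain c where c: "c \<in> CC" "y = ?f c" by blast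
      then have "hdist N u c = i" using y hd by simp
      then show "y \<in> ?f ` {c \<in> CC. hdist N u c = i}" using c by blast
    qed
  qed
qed

lemma count_single:
  assumes "x \<in> vecs N" "x \<notin> CC"
  shows "\<exists>p a. p < N \<and> a \<noteq> 0 \<and> (\<forall>i. card {c \<in> CC. hdist N x c = i} = card {c \<in> CC. hdist N (vscale a (uv p)) c = i})"
proof -
  obtain p a where pa: "p < N" "a \<noteq> 0" "x - vscale a (uv p) \<in> CC" using not_CC_decomp assms by blast
  have e: "x - (x - vscale a (uv p)) = vscale a (uv p)" by simp
  have "\<forall>i. card {c \<in> CC. hdist N x c = i} = card {c \<in> CC. hdist N (vscale a (uv p)) c = i}"
    using card_translate[OF pa(3), of x] unfolding e by blast
  then show ?thesis using pa by blast
qed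

lemma comp_reg: "completely_regular N CC"
  unfolding completely_regular_def
proof (intro ballI impI allI)
  fix x y :: "nat \<Rightarrow> 'a" and i
  assume xy: "x \<in> vecs N" "y \<in> vecs N" "dist_to_code N CC x = dist_to_code N CC y"
  show "card {c \<in> CC. hdist N x c = i} = card {c \<in> CC. hdist N y c = i}"
  proof (cases "x \<in> CC")
    case True
    have "y \<in> CC"
    proof (rule ccontr)
      assume "y \<notin> CC"
      then have "dist_to_code N CC y = 1" using dist_out xy(2) by simp
      moreover have "dist_to_code N CC x = 0" using dist_in True by simp
      ultimately show False using xy(3) by simp
    qed
    have "card {c \<in> CC. hdist N x c = i} = card {c \<in> CC. hdist N (x - x) c = i}"
      using card_translate[OF True] .
    also have "\<dots> = card {c \<in> CC. hdist N (y - y) c = i}" by simp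
    also have "\<dots> = card {c \<in> CC. hdist N y c = i}" using card_translate[OF \<open>y \<in> CC\<close>, of y] by simp
    finally show ?thesis .
  next
    case False
    have "y \<notin> CC"
    proof
      assume "y \<in> CC"
      then have "dist_to_code N CC y = 0" using dist_in by simp
      moreover have "dist_to_code N CC x = 1" using dist_out xy(1) False by simp
      ultimately show False using xy(3) by simp
    qed
    obtain p a where pa: "p < N" "a \<noteq> 0" "\<forall>i. card {c \<in> CC. hdist N x c = i} = card {c \<in> CC. hdist N (vscale a (uv p)) c = i}"
      using count_single xy(1) False by blast
    obtain p' b where pb: "p' < N" "b \<noteq> 0" "\<forall>i. card {c \<in> CC. hdist N y c = i} = card {c \<in> CC. hdist N (vscale b (uv p')) c = i}"
      using count_single xy(2) \<open>y \<notin> CC\<close> by blast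
    obtain M where M: "M \<in> Aut N CC" "vmul N (vscale a (uv p)) M = vscale b (uv p')"
      "\<forall>x y. hdist N (vmul N x M) (vmul N y M) = hdist N x y"
      using strong_trans[OF pa(1) pb(1) pa(2) pb(2)] by blast
    have "card {c \<in> CC. hdist N (vscale a (uv p)) c = i} = card {c \<in> CC. hdist N (vscale b (uv p')) c = i}"
      using card_aut[OF M(1) M(3), of "vscale a (uv p)" i] M(2) by simp
    then show ?thesis using pa(3) pb(3) by simp
  qed
qed

end

lemma sum_delta_mult: "i < (r::nat) \<Longrightarrow> (\<Sum>i'<r. (if i' = i then 1 else 0) * f i') = (f i :: 'a::semiring_1)"
proof -
  assume "i < r"
  have "(\<Sum>i'<r. (if i' = i then 1 else 0) * f i') = (\<Sum>i'<r. if i' = i then f i else 0)"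
    by (rule sum.cong) auto
  also have "\<dots> = f i" using \<open>i < r\<close> by (subst sum.delta) simp_all
  finally show ?thesis .
qed

lemma gen_rep:
  fixes A :: "nat \<Rightarrow> nat \<Rightarrow> 'a::field"
  assumes na: "na \<ge> 1" and G: "is_generator_matrix ra na A (repetition_code na)"
  shows "ra = 1 \<and> A 0 0 \<noteq> 0 \<and> (\<forall>s<na. A 0 s = A 0 0)"
proof -
  have rs: "row_space ra na A = repetition_code na" and ind: "\<And>c. (\<forall>j<na. (\<Sum>i<ra. c i * A i j) = 0) \<Longrightarrow> (\<forall>i<ra. c i = 0)"
    using G by (auto simp: is_generator_matrix_def)
  have row: "\<forall>s<na. A i s = A i 0" if i: "i < ra" for i
  proof -
    define v where "v = (\<lambda>j. if j < na then A i j else 0)"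
    have "v \<in> row_space ra na A"
    proof -
      have "\<forall>j. v j = (if j < na then (\<Sum>i'<ra. (if i' = i then 1 else 0) * A i' j) else 0)"
        using i by (simp add: v_def sum_delta_mult)
      then show ?thesis unfolding row_space_def
        by (intro CollectI exI[of _ "\<lambda>i'. if i' = i then 1 else 0"])
    qed
    then obtain c where c: "\<forall>j. v j = (if j < na then c else 0)" using rs by (auto simp: repetition_code_def)
    have "A i s = c" if "s < na" for s using c[rule_format, of s] that by (simp add: v_def)
    moreover have "0 < na" using na by simp
    ultimately show ?thesis by simp
  qed
  have ra1: "ra \<ge> 1"
  proof (rule ccontr)
    assume "\<not> ra \<ge> 1"
    then have "ra = 0" by simp
    have "(\<lambda>j. if j < na then (1::'a) else 0) \<in> repetition_code na" by (auto simp: repetition_code_def)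
    then have "(\<lambda>j. if j < na then (1::'a) else 0) \<in> row_space ra na A" using rs by simp
    then obtain c where c: "\<forall>j. (if j < na then (1::'a) else 0) = (if j < na then (\<Sum>i<ra. c i * A i j) else 0)"
      unfolding row_space_def by blast
    have "0 < na" using na by simp
    then have "(1::'a) = (\<Sum>i<ra. c i * A i 0)" using c[rule_format, of 0] by simp
    then have "(1::'a) = 0" using \<open>ra = 0\<close> by simp
    then show False by simp
  qed
  have r0: "\<forall>s<na. A 0 s = A 0 0" by (rule row) (use ra1 in simp)
  have a0: "A 0 0 \<noteq> 0"
  proof
    assume "A 0 0 = 0"
    then have z: "\<forall>j<na. A 0 j = 0" using r0 by metis
    have "\<forall>j<na. (\<Sum>i<ra. (if i = 0 then 1 else 0) * A i j) = 0"
      using z ra1 by (simp add: sum_delta_mult)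
    then have "\<forall>i<ra. (if i = 0 then 1 else 0 :: 'a) = 0" by (rule ind)
    then have "(if (0::nat) = 0 then 1 else 0 :: 'a) = 0" using ra1 by (metis less_one le_less_trans not_le)
    then show False by simp
  qed
  have ra2: "ra = 1"
  proof (rule ccontr)
    assume "ra \<noteq> 1"
    then have "ra \<ge> 2" using ra1 by simp
    define c where "c i = (if i = 0 then A 1 0 else 0) + (if i = 1 then - A 0 0 else 0)" for i :: nat
    have "\<forall>j<na. (\<Sum>i<ra. c i * A i j) = 0"
    proof (intro allI impI)
      fix j assume j: "j < na"
      have "(\<Sum>i<ra. c i * A i j) = (\<Sum>i<ra. (if i = 0 then A 1 0 * A i j else 0) + (if i = 1 then - A 0 0 * A i j else 0))"
        by (rule sum.cong) (auto simp: c_def)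
      also have "\<dots> = (\<Sum>i<ra. (if i = 0 then A 1 0 * A i j else 0)) + (\<Sum>i<ra. (if i = 1 then - A 0 0 * A i j else 0))"
        by (rule sum.distrib)
      also have "\<dots> = A 1 0 * A 0 j + (- A 0 0 * A 1 j)" using \<open>ra \<ge> 2\<close> by (simp add: sum.delta)
      also have "\<dots> = 0"
      proof -
        have r1: "\<forall>s<na. A 1 s = A 1 0" by (rule row) (use \<open>ra \<ge> 2\<close> in simp)
        have "A 0 j = A 0 0" "A 1 j = A 1 0" using r0 r1 j by blast+
        then show ?thesis by (simp add: algebra_simps)
      qed
      finally show "(\<Sum>i<ra. c i * A i j) = 0" .
    qed
    then have "c 1 = 0" using ind \<open>ra \<ge> 2\<close> by simp
    then show False using a0 by (simp add: c_def)
  qed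
  show ?thesis using ra2 a0 r0 by blast
qed

context kr
begin

lemma pcm_eq:
  fixes A :: "nat \<Rightarrow> nat \<Rightarrow> 'a"
  assumes a: "A 0 0 \<noteq> 0" "\<forall>s<na. A 0 s = A 0 0"
  shows "pcm_code (1 * mb) (na * nb) (kron mb nb A B) = CC"
proof -
  have "(\<Sum>j<na * nb. kron mb nb A B i j * x j) = A 0 0 * syn x i" if i: "i < mb" for i x
  proof -
    have "(\<Sum>j<na * nb. kron mb nb A B i j * x j) = (\<Sum>j<na * nb. A 0 0 * (B i (j mod nb) * x j))"
    proof (rule sum.cong[OF refl])
      fix j assume "j \<in> {..<na * nb}"
      then have "j div nb < na" using nb_pos by (simp add: less_mult_imp_div_less)
      then have "A 0 (j div nb) = A 0 0" using a(2) by blast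
      then show "kron mb nb A B i j * x j = A 0 0 * (B i (j mod nb) * x j)"
        using i by (simp add: kron_def)
    qed
    also have "\<dots> = A 0 0 * syn x i" using i by (simp add: syn_def N_def sum_distrib_left)
    finally show ?thesis .
  qed
  note s = this
  have "(\<forall>i<1 * mb. (\<Sum>j<na * nb. kron mb nb A B i j * x j) = 0) \<longleftrightarrow> syn x = 0" for x
  proof -
    have "(\<forall>i<1 * mb. (\<Sum>j<na * nb. kron mb nb A B i j * x j) = 0) \<longleftrightarrow> (\<forall>i<mb. syn x i = 0)"
      using s a(1) by simp
    also have "\<dots> \<longleftrightarrow> syn x = 0" by (auto simp: fun_eq_iff syn_def)
    finally show ?thesis .
  qed
  then show ?thesis by (auto simp: pcm_code_def CC_def N_def)
qed

end

theorem theorem3p4: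
  fixes A B :: "nat \<Rightarrow> nat \<Rightarrow> 'a::{field,finite}"
    and ra na mb nb :: nat
  assumes "na \<ge> 1"
    and "is_generator_matrix ra na A (repetition_code na)"
    and "is_hamming_pcm mb nb B"
  defines "n \<equiv> na * nb"
    and "C \<equiv> pcm_code (ra * mb) (na * nb) (kron mb nb A B)"
  shows "C \<subseteq> vecs n \<and> code_dim C = n - mb \<and> covering_radius n C = 1
    \<and> (na > 1 \<longrightarrow> min_distance n C = 2) \<and> (na = 1 \<longrightarrow> min_distance n C = 3)
    \<and> aut_transitive n C \<and> completely_transitive n C \<and> completely_regular n C"
proof -
  interpret K: kr B mb nb na
    by unfold_locales (use assms(1,3) in auto)
  have g: "ra = 1 \<and> A 0 0 \<noteq> 0 \<and> (\<forall>s<na. A 0 s = A 0 0)" by (rule gen_rep[OF assms(1,2)])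
  have ra1: "ra = 1" and a0: "A 0 0 \<noteq> 0" and r0: "\<forall>s<na. A 0 s = A 0 0" using g by blast+
  have CC: "C = K.CC" unfolding C_def ra1 by (rule K.pcm_eq[of A, OF a0 r0])
  have nN: "n = K.N" by (simp add: n_def K.N_def)
  show ?thesis unfolding CC nN
    using K.CC_vecs K.dim_CC K.cov_rad K.mind_na2 K.mind_na1 K.aut_trans K.comp_trans K.comp_reg
    by (intro conjI impI) auto
qed


end
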